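(* Let $G=(V,E)$ be a finite oriented 2-edge-connected subcubic graph (parallel edges allowed, no loops) with a root vertex $u$ of degree $2$. Let $\mu : V \rightarrow \mathbb{Z}_3$, and for $k=2,3$ let $\psi_k : \delta(u) \rightarrow \mathbb{Z}_k$. Suppose that (i) $\sum_{v \in V} \mu(v) = 0$; (ii) $\mathrm{supp}(\mu) \subseteq V_2(G)$; (iii) $\partial \psi_3(u) = \mu(u)$; (iv) $\partial \psi_2(u) = 0$ if $\mu(u) = 0$; (v) $(\psi_2(e), \psi_3(e)) \neq (0,0)$ for every $e \in \delta(u)$. Then there exist functions $\varphi_k : E \rightarrow \mathbb{Z}_k$ for $k=2,3$ such that (1) $\varphi_k|_{\delta(u)} = \psi_k$ for $k=2,3$; (2) $\partial \varphi_3 = \mu$; (3) for every vertex $v \in V$, $\partial \varphi_2(v) = 0$ whenever $\mu(v) = 0$; (4) $(\varphi_2(e), \varphi_3(e)) \neq (0,0)$ for every $e \in E$.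
   Context: Graphs may have parallel edges but no loops. For a vertex $v$, $\delta(v)$ is the set of edges incident with $v$, $\delta^+(v)$ the set of edges directed away from $v$, and $\delta^-(v)$ the set of edges directed toward $v$. $V_t(G)$ denotes the set of vertices of degree $t$ in $G$; $G$ is subcubic if every vertex has degree at most $3$. For a function $\varphi$ defined on a set of edges containing all edges incident with $v$ and taking values in $\mathbb{Z}_k$, the boundary at $v$ is $\partial \varphi(v) = \sum_{e \in \delta^+(v)} \varphi(e) - \sum_{e \in \delta^-(v)} \varphi(e)$; in particular $\partial\psi_k(u)$ is defined for $\psi_k : \delta(u)\to\mathbb{Z}_k$, and for $\varphi : E \to \mathbb{Z}_k$, $\partial\varphi : V \to \mathbb{Z}_k$. $\mathrm{supp}(\mu)$ is the set of vertices $v$ with $\mu(v) \neq 0$. *)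

theory Defs
  imports Main "HOL-Library.Numeral_Type"
begin

text \<open>Z_2 and Z_3 are the types 2 and 3 of HOL-Library.Numeral_Type.\<close>

definition oriented_graph :: "'v set \<Rightarrow> 'e set \<Rightarrow> ('e \<Rightarrow> 'v) \<Rightarrow> ('e \<Rightarrow> 'v) \<Rightarrow> bool" where
  "oriented_graph V E tail head \<longleftrightarrow> finite V \<and> finite E \<and>
     (\<forall>e\<in>E. tail e \<in> V \<and> head e \<in> V \<and> tail e \<noteq> head e)"

definition delta :: "'e set \<Rightarrow> ('e \<Rightarrow> 'v) \<Rightarrow> ('e \<Rightarrow> 'v) \<Rightarrow> 'v \<Rightarrow> 'e set" where
  "delta E tail head v = {e\<in>E. tail e = v \<or> head e = v}"

definition delta_out :: "'e set \<Rightarrow> ('e \<Rightarrow> 'v) \<Rightarrow> 'v \<Rightarrow> 'e set" where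
  "delta_out E tail v = {e\<in>E. tail e = v}"

definition delta_in :: "'e set \<Rightarrow> ('e \<Rightarrow> 'v) \<Rightarrow> 'v \<Rightarrow> 'e set" where
  "delta_in E head v = {e\<in>E. head e = v}"

definition degree :: "'e set \<Rightarrow> ('e \<Rightarrow> 'v) \<Rightarrow> ('e \<Rightarrow> 'v) \<Rightarrow> 'v \<Rightarrow> nat" where
  "degree E tail head v = card (delta E tail head v)"

definition subcubic :: "'v set \<Rightarrow> 'e set \<Rightarrow> ('e \<Rightarrow> 'v) \<Rightarrow> ('e \<Rightarrow> 'v) \<Rightarrow> bool" where
  "subcubic V E tail head \<longleftrightarrow> (\<forall>v\<in>V. degree E tail head v \<le> 3)"

definition boundary :: "'e set \<Rightarrow> ('e \<Rightarrow> 'v) \<Rightarrow> ('e \<Rightarrow> 'v) \<Rightarrow> ('e \<Rightarrow> 'a::ab_group_add) \<Rightarrow> 'v \<Rightarrow> 'a" where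
  "boundary E tail head phi v = (\<Sum>e\<in>delta_out E tail v. phi e) - (\<Sum>e\<in>delta_in E head v. phi e)"

definition adj :: "'e set \<Rightarrow> ('e \<Rightarrow> 'v) \<Rightarrow> ('e \<Rightarrow> 'v) \<Rightarrow> ('v \<times> 'v) set" where
  "adj F tail head = {(x, y). \<exists>e\<in>F. (tail e = x \<and> head e = y) \<or> (tail e = y \<and> head e = x)}"

definition connected_by :: "'v set \<Rightarrow> 'e set \<Rightarrow> ('e \<Rightarrow> 'v) \<Rightarrow> ('e \<Rightarrow> 'v) \<Rightarrow> bool" where
  "connected_by V F tail head \<longleftrightarrow> (\<forall>x\<in>V. \<forall>y\<in>V. (x, y) \<in> (adj F tail head)\<^sup>*)"

definition two_edge_connected :: "'v set \<Rightarrow> 'e set \<Rightarrow> ('e \<Rightarrow> 'v) \<Rightarrow> ('e \<Rightarrow> 'v) \<Rightarrow> bool" where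
  "two_edge_connected V E tail head \<longleftrightarrow> connected_by V E tail head \<and>
     (\<forall>e\<in>E. connected_by V (E - {e}) tail head)"

end

theory Submission
  imports Defs
begin


lemma three_cases: "(x::3) = 0 \<or> x = 1 \<or> x = 2"
proof (cases x)
  case (of_int z)
  then have "z = 0 \<or> z = 1 \<or> z = 2" by auto
  then show ?thesis using of_int by auto
qed

lemma two_cases: "(x::2) = 0 \<or> x = 1"
proof (cases x)
  case (of_int z)
  then have "z = 0 \<or> z = 1" by auto
  then show ?thesis using of_int by auto
qed

lemma two_neg[simp]: "(-x::2) = x" using two_cases[of x] by auto

definition inc :: "('e \<Rightarrow> 'v) \<Rightarrow> ('e \<Rightarrow> 'v) \<Rightarrow> 'v \<Rightarrow> 'e \<Rightarrow> 'a::comm_ring_1" where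
  "inc ta hb v e = (if ta e = v then 1 else 0) - (if hb e = v then 1 else 0)"

definition bd :: "'e set \<Rightarrow> ('e \<Rightarrow> 'v) \<Rightarrow> ('e \<Rightarrow> 'v) \<Rightarrow> ('e \<Rightarrow> 'a::comm_ring_1) \<Rightarrow> 'v \<Rightarrow> 'a" where
  "bd E ta hb \<phi> v = (\<Sum>e\<in>E. inc ta hb v e * \<phi> e)"

lemma boundary_bd: "finite E \<Longrightarrow> boundary E ta hb \<phi> v = bd E ta hb (\<phi>::'e\<Rightarrow>'a::comm_ring_1) v"
  unfolding boundary_def delta_out_def delta_in_def bd_def
  by (simp add: sum.inter_filter sum_subtractf[symmetric]) (rule sum.cong, auto simp: inc_def)

lemma inc_nonincident: "ta e \<noteq> v \<Longrightarrow> hb e \<noteq> v \<Longrightarrow> inc ta hb v e = 0"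
  by (simp add: inc_def)

lemma inc_tail: "ta e = v \<Longrightarrow> hb e \<noteq> v \<Longrightarrow> inc ta hb v e = 1"
  by (simp add: inc_def)

lemma inc_head: "ta e \<noteq> v \<Longrightarrow> hb e = v \<Longrightarrow> inc ta hb v e = -1"
  by (simp add: inc_def)

lemma inc_sq: "ta e \<noteq> hb e \<Longrightarrow> ta e = v \<or> hb e = v \<Longrightarrow> inc ta hb v e * inc ta hb v e = 1"
  by (auto simp: inc_def)

lemma inc_opp: "ta e \<noteq> hb e \<Longrightarrow> inc ta hb (hb e) e = - inc ta hb (ta e) e"
  by (auto simp: inc_def)

lemma bd_cong:
  assumes "\<And>e. e \<in> E \<Longrightarrow> ta e = v \<or> hb e = v \<Longrightarrow> \<phi> e = \<phi>' e"
  shows "bd E ta hb \<phi> v = bd E ta hb \<phi>' v"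
  unfolding bd_def
proof (rule sum.cong)
  fix e assume "e \<in> E"
  then show "inc ta hb v e * \<phi> e = inc ta hb v e * \<phi>' e"
    using assms[of e] by (cases "ta e = v \<or> hb e = v") (auto simp: inc_nonincident)
qed simp

lemma bd_union: "finite A \<Longrightarrow> finite B \<Longrightarrow> A \<inter> B = {} \<Longrightarrow> bd (A \<union> B) ta hb \<phi> v = bd A ta hb \<phi> v + bd B ta hb \<phi> v"
  unfolding bd_def by (rule sum.union_disjoint)

lemma bd_nonincident: "(\<And>e. e \<in> A \<Longrightarrow> ta e \<noteq> v \<and> hb e \<noteq> v) \<Longrightarrow> bd A ta hb \<phi> v = 0"
  unfolding bd_def by (rule sum.neutral) (auto simp: inc_nonincident)

lemma bd_restrict: 
  assumes "finite E" "\<And>e. e \<in> E - A \<Longrightarrow> ta e \<noteq> v \<and> hb e \<noteq> v" "A \<subseteq> E"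
  shows "bd E ta hb \<phi> v = bd A ta hb \<phi> v"
proof -
  have "E = A \<union> (E - A)" using assms by auto
  then have "bd E ta hb \<phi> v = bd A ta hb \<phi> v + bd (E - A) ta hb \<phi> v"
    using assms by (metis Diff_disjoint bd_union finite_Diff finite_subset)
  also have "bd (E - A) ta hb \<phi> v = 0" using assms by (intro bd_nonincident) auto
  finally show ?thesis by simp
qed

lemma bd_single: "bd {e} ta hb \<phi> v = inc ta hb v e * \<phi> e" by (simp add: bd_def)

lemma bd_two: "f \<noteq> g \<Longrightarrow> bd {f, g} ta hb \<phi> v = inc ta hb v f * \<phi> f + inc ta hb v g * \<phi> g" by (simp add: bd_def)

lemma sum_fiber_inc:
  assumes "finite V" "ta e \<in> V" "hb e \<in> V"
  shows "(\<Sum>w\<in>{w\<in>V. r w = y}. inc ta hb w e) = (inc (r \<circ> ta) (r \<circ> hb) y e :: 'a::comm_ring_1)"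
proof -
  have fin: "finite {w\<in>V. r w = y}" using assms by auto
  have "(\<Sum>w\<in>{w\<in>V. r w = y}. inc ta hb w e) =
     (\<Sum>w\<in>{w\<in>V. r w = y}. (if ta e = w then 1 else 0)) - (\<Sum>w\<in>{w\<in>V. r w = y}. (if hb e = w then (1::'a) else 0))"
    by (simp add: inc_def sum_subtractf)
  also have "\<dots> = (if ta e \<in> {w\<in>V. r w = y} then 1 else 0) - (if hb e \<in> {w\<in>V. r w = y} then 1 else 0)"
    using fin by (simp add: sum.delta)
  also have "\<dots> = inc (r \<circ> ta) (r \<circ> hb) y e" using assms by (simp add: inc_def)
  finally show ?thesis .
qed

lemma bd_fiber:
  assumes "finite V" "finite E" "\<forall>e\<in>E. ta e \<in> V \<and> hb e \<in> V"
  shows "(\<Sum>w\<in>{w\<in>V. r w = y}. bd E ta hb \<phi> w) = bd {e\<in>E. r (ta e) \<noteq> r (hb e)} (r \<circ> ta) (r \<circ> hb) (\<phi>::'e\<Rightarrow>'a::comm_ring_1) y"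
proof -
  have "(\<Sum>w\<in>{w\<in>V. r w = y}. bd E ta hb \<phi> w) = (\<Sum>e\<in>E. \<Sum>w\<in>{w\<in>V. r w = y}. inc ta hb w e * \<phi> e)"
    unfolding bd_def by (rule sum.swap)
  also have "\<dots> = (\<Sum>e\<in>E. (\<Sum>w\<in>{w\<in>V. r w = y}. inc ta hb w e) * \<phi> e)"
    by (simp add: sum_distrib_right)
  also have "\<dots> = (\<Sum>e\<in>E. inc (r \<circ> ta) (r \<circ> hb) y e * \<phi> e)"
    using assms by (intro sum.cong) (auto simp: sum_fiber_inc)
  also have "\<dots> = (\<Sum>e\<in>E. if r (ta e) \<noteq> r (hb e) then inc (r \<circ> ta) (r \<circ> hb) y e * \<phi> e else 0)"
    by (intro sum.cong) (auto simp: inc_def)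
  also have "\<dots> = bd {e\<in>E. r (ta e) \<noteq> r (hb e)} (r \<circ> ta) (r \<circ> hb) \<phi> y"
    unfolding bd_def using assms by (simp add: sum.inter_filter)
  finally show ?thesis .
qed

lemma bd_total:
  assumes "finite V" "finite E" "\<forall>e\<in>E. ta e \<in> V \<and> hb e \<in> V"
  shows "(\<Sum>w\<in>V. bd E ta hb (\<phi>::'e\<Rightarrow>'a::comm_ring_1) w) = 0"
  using bd_fiber[OF assms, where r="\<lambda>_. undefined" and y=undefined and \<phi>=\<phi>] by (simp add: bd_def)

lemma adj_mono: "F \<subseteq> F' \<Longrightarrow> adj F ta hb \<subseteq> adj F' ta hb"
  unfolding adj_def by auto

lemma connected_mono: "connected_by V F ta hb \<Longrightarrow> F \<subseteq> F' \<Longrightarrow> connected_by V F' ta hb"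
proof -
  assume a: "connected_by V F ta hb" "F \<subseteq> F'"
  have "(adj F ta hb)\<^sup>* \<subseteq> (adj F' ta hb)\<^sup>*" using adj_mono[OF a(2)] by (rule rtrancl_mono)
  then show ?thesis using a(1) unfolding connected_by_def by blast
qed

lemma cross:
  assumes "(x, y) \<in> (adj F ta hb)\<^sup>*" "x \<in> D" "y \<notin> D"
  shows "\<exists>e\<in>F. (ta e \<in> D \<and> hb e \<notin> D) \<or> (hb e \<in> D \<and> ta e \<notin> D)"
  using assms
proof (induction rule: rtrancl_induct)
  case base then show ?case by simp
next
  case (step y z)
  show ?case
  proof (cases "y \<in> D")
    case True
    from step.hyps(2) obtain e where "e \<in> F" "(ta e = y \<and> hb e = z) \<or> (ta e = z \<and> hb e = y)"
      unfolding adj_def by blast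
    then show ?thesis using True step.prems(2) by blast
  next
    case False
    then show ?thesis using step.IH step.prems(1) by blast
  qed
qed

lemma adj_sym: "(x, y) \<in> adj F ta hb \<Longrightarrow> (y, x) \<in> adj F ta hb"
  unfolding adj_def by auto

lemma reach_edge:
  assumes "(x, z) \<in> (adj F ta hb)\<^sup>*" "e \<in> F" "ta e = z \<or> hb e = z"
  shows "(x, ta e) \<in> (adj F ta hb)\<^sup>*" "(x, hb e) \<in> (adj F ta hb)\<^sup>*"
proof -
  have "(ta e, hb e) \<in> adj F ta hb" using assms(2) unfolding adj_def by auto
  then have "(hb e, ta e) \<in> adj F ta hb" by (rule adj_sym)
  show "(x, ta e) \<in> (adj F ta hb)\<^sup>*"
  proof (cases "ta e = z")
    case True then show ?thesis using assms(1) by simp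
  next
    case False then have "hb e = z" using assms(3) by simp
    then show ?thesis using assms(1) \<open>(hb e, ta e) \<in> adj F ta hb\<close> 
      using rtrancl.rtrancl_into_rtrancl by fastforce
  qed
  show "(x, hb e) \<in> (adj F ta hb)\<^sup>*"
  proof (cases "hb e = z")
    case True then show ?thesis using assms(1) by simp
  next
    case False then have "ta e = z" using assms(3) by simp
    then show ?thesis using assms(1) \<open>(ta e, hb e) \<in> adj F ta hb\<close> 
      using rtrancl.rtrancl_into_rtrancl by fastforce
  qed
qed

lemma reach_image:
  assumes "(x, y) \<in> (adj F ta hb)\<^sup>*"
  shows "(r x, r y) \<in> (adj {e\<in>F. r (ta e) \<noteq> r (hb e)} (r \<circ> ta) (r \<circ> hb))\<^sup>*"
  using assms
proof (induction rule: rtrancl_induct)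
  case base then show ?case by simp
next
  case (step y z)
  show ?case
  proof (cases "r y = r z")
    case True then show ?thesis using step by simp
  next
    case False
    then have "(r y, r z) \<in> adj {e\<in>F. r (ta e) \<noteq> r (hb e)} (r \<circ> ta) (r \<circ> hb)"
      using step.hyps(2) unfolding adj_def by auto
    then show ?thesis using step by (meson rtrancl.rtrancl_into_rtrancl)
  qed
qed

lemma connected_image:
  assumes "connected_by V F ta hb"
  shows "connected_by (r ` V) {e\<in>F. r (ta e) \<noteq> r (hb e)} (r \<circ> ta) (r \<circ> hb)"
  unfolding connected_by_def
proof (intro ballI)
  fix a b assume "a \<in> r ` V" "b \<in> r ` V"
  then obtain x y where "x \<in> V" "y \<in> V" "a = r x" "b = r y" by blast
  then show "(a, b) \<in> (adj {e\<in>F. r (ta e) \<noteq> r (hb e)} (r \<circ> ta) (r \<circ> hb))\<^sup>*"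
  proof -
    have "(x, y) \<in> (adj F ta hb)\<^sup>*" using assms \<open>x \<in> V\<close> \<open>y \<in> V\<close> unfolding connected_by_def by blast
    from reach_image[OF this, of r] show ?thesis using \<open>a = r x\<close> \<open>b = r y\<close> by simp
  qed
qed

lemma tec_image:
  assumes "two_edge_connected V E ta hb"
  shows "two_edge_connected (r ` V) {e\<in>E. r (ta e) \<noteq> r (hb e)} (r \<circ> ta) (r \<circ> hb)"
proof -
  have "connected_by (r ` V) {e\<in>E. r (ta e) \<noteq> r (hb e)} (r \<circ> ta) (r \<circ> hb)"
    using assms connected_image[of V E ta hb r] unfolding two_edge_connected_def by simp
  moreover
  { fix e assume "e \<in> {e\<in>E. r (ta e) \<noteq> r (hb e)}"
    then have "connected_by V (E - {e}) ta hb" using assms unfolding two_edge_connected_def by auto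
    from connected_image[OF this, of r]
    have "connected_by (r ` V) ({e'\<in>E - {e}. r (ta e') \<noteq> r (hb e')}) (r \<circ> ta) (r \<circ> hb)" .
    moreover have "{e'\<in>E - {e}. r (ta e') \<noteq> r (hb e')} = {e\<in>E. r (ta e) \<noteq> r (hb e)} - {e}" by auto
    ultimately have "connected_by (r ` V) ({e\<in>E. r (ta e) \<noteq> r (hb e)} - {e}) (r \<circ> ta) (r \<circ> hb)" by simp
  }
  ultimately show ?thesis unfolding two_edge_connected_def by (intro conjI ballI) auto
qed

lemma oriented_image:
  assumes "oriented_graph V E ta hb"
  shows "oriented_graph (r ` V) {e\<in>E. r (ta e) \<noteq> r (hb e)} (r \<circ> ta) (r \<circ> hb)"
  using assms unfolding oriented_graph_def by (auto simp: image_iff)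

definition other :: "('e \<Rightarrow> 'v) \<Rightarrow> ('e \<Rightarrow> 'v) \<Rightarrow> 'v \<Rightarrow> 'e \<Rightarrow> 'v" where
  "other ta hb v e = (if ta e = v then hb e else ta e)"

definition ecut :: "'e set \<Rightarrow> ('e \<Rightarrow> 'v) \<Rightarrow> ('e \<Rightarrow> 'v) \<Rightarrow> 'v set \<Rightarrow> 'e set" where
  "ecut E ta hb X = {e\<in>E. (ta e \<in> X) \<noteq> (hb e \<in> X)}"

definition ntc :: "'v set \<Rightarrow> 'e set \<Rightarrow> ('e \<Rightarrow> 'v) \<Rightarrow> ('e \<Rightarrow> 'v) \<Rightarrow> 'v \<Rightarrow> bool" where
  "ntc V E ta hb u \<longleftrightarrow> (\<exists>X\<subseteq>V. u \<in> X \<and> card (ecut E ta hb X) \<le> 2 \<and>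
      (\<exists>e\<in>E. ta e \<in> X \<and> hb e \<in> X) \<and> (\<exists>e\<in>E. ta e \<in> V - X \<and> hb e \<in> V - X))"

lemma card_le1_cases: "card D \<le> 1 \<Longrightarrow> finite D \<Longrightarrow> D = {} \<or> (\<exists>d. D = {d})"
  by (metis One_nat_def card_0_eq card_1_singletonE le_Suc_eq le_zero_eq)

lemma connected_minus:
  assumes "two_edge_connected V E ta hb" "card D \<le> 1" "finite D"
  shows "connected_by V (E - D) ta hb"
proof -
  have c: "connected_by V E ta hb" using assms unfolding two_edge_connected_def by simp
  from card_le1_cases[OF assms(2,3)] show ?thesis
  proof
    assume "D = {}" then show ?thesis using c by simp
  next
    assume "\<exists>d. D = {d}"
    then obtain d where d: "D = {d}" by blast
    show ?thesis
    proof (cases "d \<in> E")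
      case True then show ?thesis using assms d unfolding two_edge_connected_def by simp
    next
      case False then have "E - D = E" using d by auto
      then show ?thesis using c by simp
    qed
  qed
qed

lemma delta_in: "e \<in> delta E ta hb v \<longleftrightarrow> e \<in> E \<and> (ta e = v \<or> hb e = v)"
  by (simp add: delta_def)

lemma finite_delta: "finite E \<Longrightarrow> finite (delta E ta hb v)"
  by (simp add: delta_def)

lemma deg_ge2:
  assumes G: "oriented_graph V E ta hb" and T: "two_edge_connected V E ta hb"
    and v: "v \<in> V" "w \<in> V" "w \<noteq> v"
  shows "2 \<le> degree E ta hb v"
proof (rule ccontr)
  assume "\<not> 2 \<le> degree E ta hb v"
  then have c: "card (delta E ta hb v) \<le> 1" by (simp add: degree_def)
  have fin: "finite E" using G by (simp add: oriented_graph_def)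
  have "connected_by V (E - delta E ta hb v) ta hb"
    using connected_minus[OF T c finite_delta[OF fin]] .
  then have "(v, w) \<in> (adj (E - delta E ta hb v) ta hb)\<^sup>*" using v unfolding connected_by_def by blast
  from cross[OF this, of "{v}"] v obtain e where "e \<in> E - delta E ta hb v" "ta e = v \<or> hb e = v" by auto
  then show False by (simp add: delta_def)
qed

lemma reach_closed:
  assumes "e \<in> F" "ta e \<in> {z. (x, z) \<in> (adj F ta hb)\<^sup>*} \<or> hb e \<in> {z. (x, z) \<in> (adj F ta hb)\<^sup>*}"
  shows "ta e \<in> {z. (x, z) \<in> (adj F ta hb)\<^sup>*} \<and> hb e \<in> {z. (x, z) \<in> (adj F ta hb)\<^sup>*}"
  using assms reach_edge[of x "ta e" F ta hb e] reach_edge[of x "hb e" F ta hb e] by auto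

lemma ecut_compl:
  assumes "\<forall>e\<in>E. ta e \<in> V \<and> hb e \<in> V"
  shows "ecut E ta hb (V - C) = ecut E ta hb C"
  using assms unfolding ecut_def by auto

lemma cut_contra:
  assumes G: "oriented_graph V E ta hb" and N: "\<not> ntc V E ta hb u" and u: "u \<in> V"
    and C: "C \<subseteq> V" "ecut E ta hb C \<subseteq> K" "card K \<le> 2" "finite K"
    and i1: "e1 \<in> E" "ta e1 \<in> C" "hb e1 \<in> C"
    and i2: "e2 \<in> E" "ta e2 \<notin> C" "hb e2 \<notin> C"
  shows False
proof -
  have ends: "\<forall>e\<in>E. ta e \<in> V \<and> hb e \<in> V" using G by (simp add: oriented_graph_def)
  have ck: "card (ecut E ta hb C) \<le> 2" using C card_mono[OF C(4) C(2)] by linarith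
  show False
  proof (cases "u \<in> C")
    case True
    have "ntc V E ta hb u" unfolding ntc_def
      apply (rule exI[of _ C])
      using True C ck i1 i2 ends by auto
    then show False using N by simp
  next
    case False
    have "ntc V E ta hb u" unfolding ntc_def
      apply (rule exI[of _ "V - C"])
      using False u C ck i1 i2 ends ecut_compl[OF ends, of C] by auto
    then show False using N by simp
  qed
qed

lemma card_diff_ge1:
  assumes "finite A" "card A = 3" "finite B" "card B \<le> 2"
  shows "\<exists>h. h \<in> A \<and> h \<notin> B"
proof (rule ccontr)
  assume "\<not> ?thesis"
  then have "A \<subseteq> B" by blast
  then have "card A \<le> card B" using assms card_mono by blast
  then show False using assms by simp
qed

lemma deg2_nbrs:
  assumes G: "oriented_graph V E ta hb" and T: "two_edge_connected V E ta hb"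
    and S: "subcubic V E ta hb" and v: "v \<in> V" and dv: "delta E ta hb v = {f, g}" "f \<noteq> g"
    and same: "other ta hb v f = other ta hb v g" and w: "w \<in> V"
  shows "w = v \<or> w = other ta hb v f"
proof (rule ccontr)
  assume nw: "\<not> (w = v \<or> w = other ta hb v f)"
  define p where "p = other ta hb v f"
  have fin: "finite E" using G by (simp add: oriented_graph_def)
  have fE: "f \<in> E" "g \<in> E" using dv by (auto simp: delta_def)
  have fv: "ta f = v \<or> hb f = v" "ta g = v \<or> hb g = v" using dv by (auto simp: delta_def)
  have nl: "ta f \<noteq> hb f" "ta g \<noteq> hb g" using G fE by (auto simp: oriented_graph_def)
  have pf: "(ta f = v \<and> hb f = p) \<or> (hb f = v \<and> ta f = p)" using fv nl by (auto simp: p_def other_def)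
  have pg: "(ta g = v \<and> hb g = p) \<or> (hb g = v \<and> ta g = p)" using fv nl same by (auto simp: p_def other_def)
  have pV: "p \<in> V" using G fE pf by (auto simp: oriented_graph_def)
  have fgp: "f \<in> delta E ta hb p" "g \<in> delta E ta hb p" using pf pg fE by (auto simp: delta_def)
  define D where "D = delta E ta hb p - {f, g}"
  have "card (delta E ta hb p) \<le> 3" using S pV by (simp add: subcubic_def degree_def)
  moreover have "card (delta E ta hb p) = card D + 2"
  proof -
    have "delta E ta hb p = D \<union> {f, g}" using fgp by (auto simp: D_def)
    moreover have "D \<inter> {f, g} = {}" by (auto simp: D_def)
    moreover have "finite D" using finite_delta[OF fin] by (simp add: D_def)
    ultimately show ?thesis using dv(2) by (simp add: card_Un_disjoint)
  qed
  ultimately have cD: "card D \<le> 1" by simp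
  have fD: "finite D" using finite_delta[OF fin] by (simp add: D_def)
  have "connected_by V (E - D) ta hb" using connected_minus[OF T cD fD] .
  then have "(v, w) \<in> (adj (E - D) ta hb)\<^sup>*" using v w unfolding connected_by_def by blast
  from cross[OF this, of "{v, p}"] nw obtain e where e: "e \<in> E - D"
    "(ta e \<in> {v, p} \<and> hb e \<notin> {v, p}) \<or> (hb e \<in> {v, p} \<and> ta e \<notin> {v, p})" by (auto simp: p_def)
  then have "e \<in> delta E ta hb v \<or> e \<in> delta E ta hb p" by (auto simp: delta_def)
  then have "e = f \<or> e = g" using e(1) dv by (auto simp: D_def)
  then show False using e pf pg by auto
qed

lemma reach_set_props:
  assumes ends: "\<forall>e\<in>E. ta e \<in> V \<and> hb e \<in> V" and F: "F \<subseteq> E"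
    and C: "C = {z\<in>V. (x, z) \<in> (adj F ta hb)\<^sup>*}"
  shows "ecut E ta hb C \<subseteq> E - F"
    "\<And>e. e \<in> F \<Longrightarrow> ta e \<in> C \<or> hb e \<in> C \<Longrightarrow> ta e \<in> C \<and> hb e \<in> C"
proof -
  show cl: "\<And>e. e \<in> F \<Longrightarrow> ta e \<in> C \<or> hb e \<in> C \<Longrightarrow> ta e \<in> C \<and> hb e \<in> C"
  proof -
    fix e assume a: "e \<in> F" "ta e \<in> C \<or> hb e \<in> C"
    have "ta e \<in> V" "hb e \<in> V" using a F ends by auto
    moreover have "ta e \<in> {z. (x, z) \<in> (adj F ta hb)\<^sup>*} \<and> hb e \<in> {z. (x, z) \<in> (adj F ta hb)\<^sup>*}"
      using reach_closed[of e F ta x hb] a C by auto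
    ultimately show "ta e \<in> C \<and> hb e \<in> C" using C by auto
  qed
  show "ecut E ta hb C \<subseteq> E - F"
    using cl unfolding ecut_def by blast
qed

lemma tec_from_minus:
  assumes "\<And>D. D \<subseteq> E' \<Longrightarrow> card D \<le> 1 \<Longrightarrow> finite D \<Longrightarrow> connected_by V' (E' - D) ta hb"
  shows "two_edge_connected V' E' ta hb"
  unfolding two_edge_connected_def
proof
  show "connected_by V' E' ta hb" using assms[of "{}"] by simp
  show "\<forall>e\<in>E'. connected_by V' (E' - {e}) ta hb" using assms by simp
qed

lemma tec_del_edge:
  assumes G: "oriented_graph V E ta hb" and T: "two_edge_connected V E ta hb"
    and N: "\<not> ntc V E ta hb u" and u: "u \<in> V"
    and e0: "e0 \<in> E" and d1: "degree E ta hb (ta e0) = 3" and d2: "degree E ta hb (hb e0) = 3"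
  shows "two_edge_connected V (E - {e0}) ta hb"
proof (rule tec_from_minus)
  fix D assume D: "D \<subseteq> E - {e0}" "card D \<le> 1" "finite D"
  have fin: "finite E" and ends: "\<forall>e\<in>E. ta e \<in> V \<and> hb e \<in> V" and nl: "ta e0 \<noteq> hb e0"
    using G e0 by (auto simp: oriented_graph_def)
  show "connected_by V (E - {e0} - D) ta hb"
  proof (rule ccontr)
    assume "\<not> ?thesis"
    then obtain x y where xy: "x \<in> V" "y \<in> V" "(x, y) \<notin> (adj (E - {e0} - D) ta hb)\<^sup>*"
      unfolding connected_by_def by blast
    define F where "F = E - {e0} - D"
    define C where "C = {z\<in>V. (x, z) \<in> (adj F ta hb)\<^sup>*}"
    have FE: "F \<subseteq> E" by (auto simp: F_def)
    note RP = reach_set_props[OF ends FE C_def]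
    have xC: "x \<in> C" "y \<notin> C" "C \<subseteq> V" using xy by (auto simp: C_def F_def)
    have cutK: "ecut E ta hb C \<subseteq> insert e0 D" using RP(1) by (auto simp: F_def)
    have "e0 \<in> ecut E ta hb C"
    proof (rule ccontr)
      assume "e0 \<notin> ecut E ta hb C"
      then have cD: "ecut E ta hb C \<subseteq> D" using cutK by auto
      have "connected_by V (E - D) ta hb" using connected_minus[OF T D(2,3)] .
      then have "(x, y) \<in> (adj (E - D) ta hb)\<^sup>*" using xy unfolding connected_by_def by blast
      from cross[OF this xC(1,2)] obtain e where "e \<in> E - D" "(ta e \<in> C \<and> hb e \<notin> C) \<or> (hb e \<in> C \<and> ta e \<notin> C)"
        by blast
      then have "e \<in> ecut E ta hb C" "e \<notin> D" by (auto simp: ecut_def)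
      then show False using cD by auto
    qed
    then have one: "(ta e0 \<in> C \<and> hb e0 \<notin> C) \<or> (hb e0 \<in> C \<and> ta e0 \<notin> C)" by (auto simp: ecut_def)
    obtain c d where cd: "c \<in> C" "d \<notin> C" "degree E ta hb c = 3" "degree E ta hb d = 3" "c \<in> {ta e0, hb e0}" "d \<in> {ta e0, hb e0}"
      using one d1 d2 by blast
    have cK: "card (insert e0 D) \<le> 2" "finite (insert e0 D)" using D
      by (auto simp: card_insert_if)
    have c3: "card (delta E ta hb c) = 3" using cd(3) by (simp add: degree_def)
    obtain h where h: "h \<in> delta E ta hb c" "h \<notin> insert e0 D"
      using card_diff_ge1[OF finite_delta[OF fin] c3 cK(2) cK(1)] by blast
    have hF: "h \<in> F" "ta h = c \<or> hb h = c" using h by (auto simp: F_def delta_def)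
    have hC: "ta h \<in> C" "hb h \<in> C" using RP(2)[OF hF(1)] hF(2) cd(1) by auto
    have d3: "card (delta E ta hb d) = 3" using cd(4) by (simp add: degree_def)
    obtain h' where h': "h' \<in> delta E ta hb d" "h' \<notin> insert e0 D"
      using card_diff_ge1[OF finite_delta[OF fin] d3 cK(2) cK(1)] by blast
    have hF': "h' \<in> F" "ta h' = d \<or> hb h' = d" using h' by (auto simp: F_def delta_def)
    have hC': "ta h' \<notin> C" "hb h' \<notin> C" using RP(2)[OF hF'(1)] hF'(2) cd(2) by auto
    show False
      using cut_contra[OF G N u xC(3) cutK cK(1) cK(2), of h h'] hF hF' hC hC' FE by auto
  qed
qed

lemma tec_del_vertex:
  assumes G: "oriented_graph V E ta hb" and T: "two_edge_connected V E ta hb"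
    and N: "\<not> ntc V E ta hb u" and u: "u \<in> V"
    and sV: "s \<in> V" and ds: "delta E ta hb s = {f, g}" "f \<noteq> g"
    and pf: "(ta f = s \<and> hb f = p) \<or> (hb f = s \<and> ta f = p)"
    and qg: "(ta g = s \<and> hb g = q) \<or> (hb g = s \<and> ta g = q)"
    and pq: "p \<noteq> q" and dp: "degree E ta hb p = 3" and dq: "degree E ta hb q = 3"
  shows "two_edge_connected (V - {s}) (E - {f, g}) ta hb"
proof (rule tec_from_minus)
  fix D assume D: "D \<subseteq> E - {f, g}" "card D \<le> 1" "finite D"
  have fin: "finite E" and ends: "\<forall>e\<in>E. ta e \<in> V \<and> hb e \<in> V"
    and nl: "\<forall>e\<in>E. ta e \<noteq> hb e"
    using G by (auto simp: oriented_graph_def)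
  have fgE: "f \<in> E" "g \<in> E" using ds by (auto simp: delta_def)
  have ps: "p \<noteq> s" "q \<noteq> s" using pf qg nl fgE by auto
  have inc_s: "\<And>e. e \<in> E \<Longrightarrow> ta e = s \<or> hb e = s \<Longrightarrow> e = f \<or> e = g"
    using ds by (auto simp: delta_def)
  show "connected_by (V - {s}) (E - {f, g} - D) ta hb"
  proof (rule ccontr)
    assume "\<not> ?thesis"
    then obtain x y where xy: "x \<in> V - {s}" "y \<in> V - {s}" "(x, y) \<notin> (adj (E - {f, g} - D) ta hb)\<^sup>*"
      unfolding connected_by_def by blast
    define F where "F = E - {f, g} - D"
    define C where "C = {z\<in>V. (x, z) \<in> (adj F ta hb)\<^sup>*}"
    have FE: "F \<subseteq> E" by (auto simp: F_def)
    note RP = reach_set_props[OF ends FE C_def]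
    have xC: "x \<in> C" "y \<notin> C" "C \<subseteq> V" using xy by (auto simp: C_def F_def)
    have sC: "s \<notin> C"
    proof
      assume "s \<in> C"
      then have "(x, s) \<in> (adj F ta hb)\<^sup>*" by (simp add: C_def)
      from cross[OF this, of "- {s}"] xy obtain e where "e \<in> F" "ta e = s \<or> hb e = s" by auto
      then show False using inc_s by (auto simp: F_def)
    qed
    have cutK: "ecut E ta hb C \<subseteq> {f, g} \<union> D" using RP(1) by (auto simp: F_def)
    have conD: "(x, y) \<in> (adj (E - D) ta hb)\<^sup>*"
      using connected_minus[OF T D(2,3)] xy unfolding connected_by_def by blast
    have key: "\<And>C'. x \<in> C' \<Longrightarrow> y \<notin> C' \<Longrightarrow> ecut E ta hb C' \<subseteq> D \<Longrightarrow> False"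
    proof -
      fix C' assume a: "x \<in> C'" "y \<notin> C'" "ecut E ta hb C' \<subseteq> D"
      from cross[OF conD a(1,2)] obtain e where "e \<in> E - D" "(ta e \<in> C' \<and> hb e \<notin> C') \<or> (hb e \<in> C' \<and> ta e \<notin> C')"
        by blast
      then have "e \<in> ecut E ta hb C'" "e \<notin> D" by (auto simp: ecut_def)
      then show False using a(3) by auto
    qed
    have cK: "\<And>z. card (insert z D) \<le> 2" "\<And>z. finite (insert z D)" using D
      by (auto simp: card_insert_if)
    have internal: "\<And>c z. c \<in> {p, q} \<Longrightarrow> degree E ta hb c = 3 \<Longrightarrow> z \<in> {f, g} \<Longrightarrow> (ta z = c \<or> hb z = c)
        \<Longrightarrow> \<exists>h\<in>F. ta h = c \<or> hb h = c"
    proof -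
      fix c z assume a: "c \<in> {p, q}" "degree E ta hb c = 3" "z \<in> {f, g}" "ta z = c \<or> hb z = c"
      have c3: "card (delta E ta hb c) = 3" using a by (simp add: degree_def)
      obtain h where h: "h \<in> delta E ta hb c" "h \<notin> insert z D"
        using card_diff_ge1[OF finite_delta[OF fin] c3 cK(2) cK(1)] by blast
      have "h \<noteq> f" "h \<noteq> g"
      proof -
        { fix w assume w: "w \<in> {f, g}" "w \<noteq> z" "w = h"
          have "ta w = c \<or> hb w = c" using h w by (auto simp: delta_def)
          then have False using w a pf qg pq ps by auto }
        then show "h \<noteq> f" "h \<noteq> g" using h by auto
      qed
      then show "\<exists>h\<in>F. ta h = c \<or> hb h = c" using h by (auto simp: F_def delta_def)
    qed
    show False
    proof (cases "p \<in> C")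
      case pC: True
      show ?thesis
      proof (cases "q \<in> C")
        case qC: True
        have "ecut E ta hb (insert s C) \<subseteq> D"
        proof
          fix e assume e: "e \<in> ecut E ta hb (insert s C)"
          then have eE: "e \<in> E" by (simp add: ecut_def)
          show "e \<in> D"
          proof (cases "ta e = s \<or> hb e = s")
            case True
            then have "e = f \<or> e = g" using inc_s eE by blast
            then show ?thesis using e pf qg pC qC by (auto simp: ecut_def)
          next
            case False
            then have "e \<in> ecut E ta hb C" using e by (auto simp: ecut_def)
            then have "e \<in> {f, g} \<union> D" using cutK by auto
            then show ?thesis using False pf qg by auto
          qed
        qed
        then show False using key[of "insert s C"] xC xy by auto
      next
        case qC: False
        have cut1: "ecut E ta hb C \<subseteq> insert f D" using cutK qC sC qg by (auto simp: ecut_def)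
        obtain h where h: "h \<in> F" "ta h = p \<or> hb h = p" using internal[of p f] dp pf by auto
        have hC: "ta h \<in> C" "hb h \<in> C" using RP(2)[OF h(1)] h(2) pC by auto
        have hE: "h \<in> E" using h FE by auto
        have g1: "ta g \<notin> C" "hb g \<notin> C" using qC sC qg by auto
        show False using cut_contra[OF G N u xC(3) cut1 cK(1) cK(2) hE hC fgE(2) g1] .
      qed
    next
      case pC: False
      show ?thesis
      proof (cases "q \<in> C")
        case qC: True
        have cut1: "ecut E ta hb C \<subseteq> insert g D" using cutK pC sC pf by (auto simp: ecut_def)
        obtain h where h: "h \<in> F" "ta h = q \<or> hb h = q" using internal[of q g] dq qg by auto
        have hC: "ta h \<in> C" "hb h \<in> C" using RP(2)[OF h(1)] h(2) qC by auto
        have hE: "h \<in> E" using h FE by auto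
        have g1: "ta f \<notin> C" "hb f \<notin> C" using pC sC pf by auto
        show False using cut_contra[OF G N u xC(3) cut1 cK(1) cK(2) hE hC fgE(1) g1] .
      next
        case qC: False
        have "ecut E ta hb C \<subseteq> D"
        proof
          fix e assume e: "e \<in> ecut E ta hb C"
          have "f \<notin> ecut E ta hb C" using pC sC pf by (auto simp: ecut_def)
          moreover have "g \<notin> ecut E ta hb C" using qC sC qg by (auto simp: ecut_def)
          ultimately show "e \<in> D" using e cutK by auto
        qed
        then show False using key xC by auto
      qed
    qed
  qed
qed




definition inst :: "'v set \<Rightarrow> 'e set \<Rightarrow> ('e\<Rightarrow>'v) \<Rightarrow> ('e\<Rightarrow>'v) \<Rightarrow> 'v \<Rightarrow> ('v \<Rightarrow> 3) \<Rightarrow> ('e \<Rightarrow> 2) \<Rightarrow> ('e \<Rightarrow> 3) \<Rightarrow> bool" where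
"inst V E ta hb u \<mu> \<psi>2 \<psi>3 \<longleftrightarrow> oriented_graph V E ta hb \<and> two_edge_connected V E ta hb \<and> subcubic V E ta hb
   \<and> u \<in> V \<and> degree E ta hb u = 2 \<and> sum \<mu> V = 0 \<and> (\<forall>v\<in>V. \<mu> v \<noteq> 0 \<longrightarrow> degree E ta hb v = 2)
   \<and> bd E ta hb \<psi>3 u = \<mu> u \<and> (\<mu> u = 0 \<longrightarrow> bd E ta hb \<psi>2 u = 0)
   \<and> (\<forall>e\<in>delta E ta hb u. \<psi>2 e \<noteq> 0 \<or> \<psi>3 e \<noteq> 0)"

definition sol :: "'v set \<Rightarrow> 'e set \<Rightarrow> ('e\<Rightarrow>'v) \<Rightarrow> ('e\<Rightarrow>'v) \<Rightarrow> 'v \<Rightarrow> ('v \<Rightarrow> 3) \<Rightarrow> ('e \<Rightarrow> 2) \<Rightarrow> ('e \<Rightarrow> 3) \<Rightarrow> ('e \<Rightarrow> 2) \<Rightarrow> ('e \<Rightarrow> 3) \<Rightarrow> bool" where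
"sol V E ta hb u \<mu> \<psi>2 \<psi>3 \<phi>2 \<phi>3 \<longleftrightarrow> (\<forall>e\<in>delta E ta hb u. \<phi>2 e = \<psi>2 e \<and> \<phi>3 e = \<psi>3 e)
   \<and> (\<forall>v\<in>V. bd E ta hb \<phi>3 v = \<mu> v) \<and> (\<forall>v\<in>V. \<mu> v = 0 \<longrightarrow> bd E ta hb \<phi>2 v = 0)
   \<and> (\<forall>e\<in>E. \<phi>2 e \<noteq> 0 \<or> \<phi>3 e \<noteq> 0)"

definition hasSol :: "'v set \<Rightarrow> 'e set \<Rightarrow> ('e\<Rightarrow>'v) \<Rightarrow> ('e\<Rightarrow>'v) \<Rightarrow> 'v \<Rightarrow> ('v \<Rightarrow> 3) \<Rightarrow> ('e \<Rightarrow> 2) \<Rightarrow> ('e \<Rightarrow> 3) \<Rightarrow> bool" where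
"hasSol V E ta hb u \<mu> \<psi>2 \<psi>3 \<longleftrightarrow> (\<exists>\<phi>2 \<phi>3. sol V E ta hb u \<mu> \<psi>2 \<psi>3 \<phi>2 \<phi>3)"

definition IHP :: "nat \<Rightarrow> 'v set \<Rightarrow> 'e set \<Rightarrow> bool" where
"IHP n (dv::'v set) (de::'e set) \<longleftrightarrow> (\<forall>(V::'v set) (E::'e set) ta hb u \<mu> \<psi>2 \<psi>3. card E < n \<longrightarrow> inst V E ta hb u \<mu> \<psi>2 \<psi>3 \<longrightarrow> hasSol V E ta hb u \<mu> \<psi>2 \<psi>3)"

lemma IHP_D: "IHP n (dv::'v set) (de::'e set) \<Longrightarrow> card (E::'e set) < n \<Longrightarrow> inst (V::'v set) E ta hb u \<mu> \<psi>2 \<psi>3 \<Longrightarrow>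
   \<exists>\<phi>2 \<phi>3. sol V E ta hb u \<mu> \<psi>2 \<psi>3 \<phi>2 \<phi>3"
  unfolding IHP_def hasSol_def by blast

lemma bd_insert_edge: "finite E' \<Longrightarrow> e0 \<notin> E' \<Longrightarrow> bd (insert e0 E') ta hb \<phi> v = bd E' ta hb \<phi> v + inc ta hb v e0 * \<phi> e0"
  by (simp add: bd_def add.commute)

lemma bd_upd_other: "e0 \<notin> E' \<Longrightarrow> bd E' ta hb (\<phi>(e0 := x)) v = bd E' ta hb \<phi> v"
  by (rule bd_cong) auto

lemma sum_inc_zero:
  assumes "finite V" "ta e \<in> V" "hb e \<in> V"
  shows "(\<Sum>w\<in>V. inc ta hb w e) = (0::'a::comm_ring_1)"
proof -
  have "(\<Sum>w\<in>V. inc ta hb w e) = (\<Sum>w\<in>V. (if ta e = w then 1 else 0)) - (\<Sum>w\<in>V. (if hb e = w then (1::'a) else 0))"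
    by (simp add: inc_def sum_subtractf)
  also have "\<dots> = 0" using assms by (simp add: sum.delta)
  finally show ?thesis .
qed

lemma delta_minus: "delta (E - {e0}) ta hb v = delta E ta hb v - {e0}"
  by (auto simp: delta_def)

lemma degree_minus_nonincident: "ta e0 \<noteq> v \<Longrightarrow> hb e0 \<noteq> v \<Longrightarrow> degree (E - {e0}) ta hb v = degree E ta hb v"
  unfolding degree_def delta_minus by (simp add: delta_def)

lemma degree_minus_incident: "finite E \<Longrightarrow> e0 \<in> E \<Longrightarrow> ta e0 = v \<or> hb e0 = v \<Longrightarrow> degree (E - {e0}) ta hb v = degree E ta hb v - 1"
  unfolding degree_def delta_minus by (subst card_Diff_singleton) (auto simp: delta_def)

lemma degree_mono: "finite E \<Longrightarrow> E' \<subseteq> E \<Longrightarrow> degree E' ta hb v \<le> degree E ta hb v"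
  unfolding degree_def by (rule card_mono) (auto simp: delta_def)

lemma two_zero2[simp]: "(2::2) = 0" by simp
lemma two_add_self[simp]: "(x::2) + x = 0" using two_cases[of x] by auto

lemma two_eq: "(a::2) + b = 0 \<Longrightarrow> a = b"
  using two_cases[of a] two_cases[of b] by auto

lemma red_edge:
  fixes V :: "'v set" and E :: "'e set" and \<mu> :: "'v \<Rightarrow> 3" and \<psi>2 :: "'e \<Rightarrow> 2" and \<psi>3 :: "'e \<Rightarrow> 3"
  assumes I: "inst V E ta hb u \<mu> \<psi>2 \<psi>3" and IH: "IHP (card E) V E"
    and N: "\<not> ntc V E ta hb u"
    and e0: "e0 \<in> E" "ta e0 \<noteq> u" "hb e0 \<noteq> u" "degree E ta hb (ta e0) = 3" "degree E ta hb (hb e0) = 3"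
    and mu0: "\<forall>v\<in>V. \<mu> v = 0"
  shows "hasSol V E ta hb u \<mu> \<psi>2 \<psi>3"
proof -
  have G: "oriented_graph V E ta hb" and T: "two_edge_connected V E ta hb" and S: "subcubic V E ta hb"
    and uV: "u \<in> V" and du: "degree E ta hb u = 2" and iii: "bd E ta hb \<psi>3 u = \<mu> u"
    and iv: "\<mu> u = 0 \<longrightarrow> bd E ta hb \<psi>2 u = 0" and v: "\<forall>e\<in>delta E ta hb u. \<psi>2 e \<noteq> 0 \<or> \<psi>3 e \<noteq> 0"
    using I by (auto simp: inst_def)
  have fin: "finite E" "finite V" and ends: "\<forall>e\<in>E. ta e \<in> V \<and> hb e \<in> V" and nl: "\<forall>e\<in>E. ta e \<noteq> hb e"
    using G by (auto simp: oriented_graph_def)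
  define E' where "E' = E - {e0}"
  define t where "t = ta e0"
  define h where "h = hb e0"
  have th: "t \<noteq> h" "t \<in> V" "h \<in> V" using nl ends e0 by (auto simp: t_def h_def)
  define \<mu>' :: "'v \<Rightarrow> 3" where "\<mu>' w = - inc ta hb w e0" for w
  have EE': "E = insert e0 E'" "e0 \<notin> E'" "finite E'" using e0 fin by (auto simp: E'_def)
  have du': "delta E' ta hb u = delta E ta hb u" using e0 by (auto simp: E'_def delta_def)
  have bdu: "\<And>\<phi>::'e \<Rightarrow> 3. bd E ta hb \<phi> u = bd E' ta hb \<phi> u" "\<And>\<phi>::'e \<Rightarrow> 2. bd E ta hb \<phi> u = bd E' ta hb \<phi> u"
    by (subst EE'(1), subst bd_insert_edge[OF EE'(3,2)], simp add: inc_nonincident e0(2,3))+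
  have mu'u: "\<mu>' u = 0" using e0 by (simp add: \<mu>'_def inc_nonincident)
  have I': "inst V E' ta hb u \<mu>' \<psi>2 \<psi>3"
    unfolding inst_def
  proof (intro conjI)
    show "oriented_graph V E' ta hb" using G by (auto simp: oriented_graph_def E'_def)
    show "two_edge_connected V E' ta hb" unfolding E'_def by (rule tec_del_edge[OF G T N uV e0(1,4,5)])
    show "subcubic V E' ta hb" using S degree_mono[OF fin(1), of E'] unfolding subcubic_def E'_def
      by (meson Diff_subset order_trans)
    show "u \<in> V" by fact
    show "degree E' ta hb u = 2" using du e0 by (simp add: E'_def degree_minus_nonincident)
    show "sum \<mu>' V = 0" unfolding \<mu>'_def using sum_inc_zero[OF fin(2), of ta e0 hb] th
      by (simp add: sum_negf t_def h_def)
    show "\<forall>v\<in>V. \<mu>' v \<noteq> 0 \<longrightarrow> degree E' ta hb v = 2"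
    proof (intro ballI impI)
      fix w assume "w \<in> V" "\<mu>' w \<noteq> 0"
      then have "ta e0 = w \<or> hb e0 = w" by (auto simp: \<mu>'_def inc_def split: if_splits)
      then show "degree E' ta hb w = 2" using degree_minus_incident[OF fin(1) e0(1), of ta w hb] e0(4,5) by (auto simp: E'_def)
    qed
    show "bd E' ta hb \<psi>3 u = \<mu>' u" using iii mu0 uV bdu mu'u by simp
    show "\<mu>' u = 0 \<longrightarrow> bd E' ta hb \<psi>2 u = 0" using iv mu0 uV bdu by simp
    show "\<forall>e\<in>delta E' ta hb u. \<psi>2 e \<noteq> 0 \<or> \<psi>3 e \<noteq> 0" using v du' by simp
  qed
  have cE': "card E' < card E" using EE' by simp
  obtain \<phi>2' \<phi>3' where sol': "sol V E' ta hb u \<mu>' \<psi>2 \<psi>3 \<phi>2' \<phi>3'"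
    using IHP_D[OF IH cE' I'] by blast
  have s1: "\<forall>e\<in>delta E' ta hb u. \<phi>2' e = \<psi>2 e \<and> \<phi>3' e = \<psi>3 e"
    and s2: "\<forall>v\<in>V. bd E' ta hb \<phi>3' v = \<mu>' v" and s3: "\<forall>v\<in>V. \<mu>' v = 0 \<longrightarrow> bd E' ta hb \<phi>2' v = 0"
    and s4: "\<forall>e\<in>E'. \<phi>2' e \<noteq> 0 \<or> \<phi>3' e \<noteq> 0" using sol' by (auto simp: sol_def)
  define x where "x = bd E' ta hb \<phi>2' t"
  define \<phi>2 where "\<phi>2 = \<phi>2'(e0 := x)"
  define \<phi>3 where "\<phi>3 = \<phi>3'(e0 := 1)"
  have bd2: "\<And>w. bd E ta hb \<phi>2 w = bd E' ta hb \<phi>2' w + inc ta hb w e0 * x"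
    unfolding EE'(1) by (simp add: \<phi>2_def bd_insert_edge[OF EE'(3,2)] bd_upd_other[OF EE'(2)])
  have bd3: "\<And>w. bd E ta hb \<phi>3 w = bd E' ta hb \<phi>3' w + inc ta hb w e0"
    unfolding EE'(1) by (simp add: \<phi>3_def bd_insert_edge[OF EE'(3,2)] bd_upd_other[OF EE'(2)])
  have zero_else: "\<And>w. w \<in> V \<Longrightarrow> w \<noteq> t \<Longrightarrow> w \<noteq> h \<Longrightarrow> bd E' ta hb \<phi>2' w = 0"
    using s3 by (auto simp: \<mu>'_def inc_def t_def h_def)
  have par: "bd E' ta hb \<phi>2' t + bd E' ta hb \<phi>2' h = 0"
  proof -
    have ends': "\<forall>e\<in>E'. ta e \<in> V \<and> hb e \<in> V" using ends by (auto simp: E'_def)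
    have "(\<Sum>w\<in>V. bd E' ta hb \<phi>2' w) = 0" by (rule bd_total[OF fin(2) EE'(3) ends'])
    moreover have "(\<Sum>w\<in>V. bd E' ta hb \<phi>2' w) = (\<Sum>w\<in>{t, h}. bd E' ta hb \<phi>2' w)"
      using th zero_else fin(2) by (intro sum.mono_neutral_right) auto
    ultimately show ?thesis using th by simp
  qed
  have "sol V E ta hb u \<mu> \<psi>2 \<psi>3 \<phi>2 \<phi>3"
    unfolding sol_def
  proof (intro conjI ballI impI)
    fix e assume "e \<in> delta E ta hb u"
    then have "e \<noteq> e0" "e \<in> delta E' ta hb u" using e0 du' by (auto simp: delta_def)
    then show "\<phi>2 e = \<psi>2 e" "\<phi>3 e = \<psi>3 e" using s1 by (auto simp: \<phi>2_def \<phi>3_def)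
  next
    fix w assume "w \<in> V"
    then show "bd E ta hb \<phi>3 w = \<mu> w" using bd3 s2 mu0 by (simp add: \<mu>'_def)
  next
    fix w assume w: "w \<in> V" "\<mu> w = 0"
    show "bd E ta hb \<phi>2 w = 0"
    proof (cases "w = t")
      case True
      then show ?thesis using bd2 th by (simp add: inc_def t_def h_def x_def)
    next
      case nt: False
      show ?thesis
      proof (cases "w = h")
        case True
        then have "bd E' ta hb \<phi>2' h = x" using two_eq[of "bd E' ta hb \<phi>2' h" x] par by (simp add: x_def add.commute)
        then show ?thesis using bd2 th True by (simp add: inc_def t_def h_def)
      next
        case False
        then show ?thesis using bd2 zero_else[OF w(1) nt False] nt by (simp add: inc_def t_def h_def)
      qed
    qed
  next
    fix e assume "e \<in> E"
    then show "\<phi>2 e \<noteq> 0 \<or> \<phi>3 e \<noteq> 0" using s4 by (cases "e = e0") (auto simp: \<phi>2_def \<phi>3_def E'_def)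
  qed
  then show ?thesis by (auto simp: hasSol_def)
qed




lemma three_zero3[simp]: "(3::3) = 0" by simp

lemma inc2: "ta e \<noteq> hb e \<Longrightarrow> ta e = v \<or> hb e = v \<Longrightarrow> (inc ta hb v e :: 2) = 1"
  by (auto simp: inc_def)

lemma inc3_sq: "ta e \<noteq> hb e \<Longrightarrow> ta e = v \<or> hb e = v \<Longrightarrow> (inc ta hb v e :: 3) * inc ta hb v e = 1"
  by (rule inc_sq)

lemma inc3_nz: "ta e \<noteq> hb e \<Longrightarrow> ta e = v \<or> hb e = v \<Longrightarrow> (inc ta hb v e :: 3) \<noteq> 0"
  by (auto simp: inc_def)

lemma three_mul_nz: "(a::3) \<noteq> 0 \<Longrightarrow> b \<noteq> 0 \<Longrightarrow> a * b \<noteq> 0"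
  using three_cases[of a] three_cases[of b] by auto

lemma delta_minus2: "delta (E - {f, g}) ta hb v = delta E ta hb v - {f, g}"
  by (auto simp: delta_def)

lemma red_vertex:
  fixes V :: "'v set" and E :: "'e set" and \<mu> :: "'v \<Rightarrow> 3" and \<psi>2 :: "'e \<Rightarrow> 2" and \<psi>3 :: "'e \<Rightarrow> 3"
  assumes I: "inst V E ta hb u \<mu> \<psi>2 \<psi>3" and IH: "IHP (card E) V E"
    and N: "\<not> ntc V E ta hb u"
    and sV: "s \<in> V" "s \<noteq> u" and ds: "delta E ta hb s = {f, g}" "f \<noteq> g"
    and pf: "(ta f = s \<and> hb f = p) \<or> (hb f = s \<and> ta f = p)"
    and qg: "(ta g = s \<and> hb g = q) \<or> (hb g = s \<and> ta g = q)"
    and pq: "p \<noteq> q" "p \<noteq> u" "q \<noteq> u" and dp: "degree E ta hb p = 3" and dq: "degree E ta hb q = 3"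
    and ms: "\<mu> s \<noteq> 0"
  shows "hasSol V E ta hb u \<mu> \<psi>2 \<psi>3"
proof -
  have G: "oriented_graph V E ta hb" and T: "two_edge_connected V E ta hb" and S: "subcubic V E ta hb"
    and uV: "u \<in> V" and du: "degree E ta hb u = 2" and iii: "bd E ta hb \<psi>3 u = \<mu> u"
    and iv: "\<mu> u = 0 \<longrightarrow> bd E ta hb \<psi>2 u = 0" and v: "\<forall>e\<in>delta E ta hb u. \<psi>2 e \<noteq> 0 \<or> \<psi>3 e \<noteq> 0"
    and sm: "sum \<mu> V = 0" and ii: "\<forall>v\<in>V. \<mu> v \<noteq> 0 \<longrightarrow> degree E ta hb v = 2"
    using I by (auto simp: inst_def)
  have fin: "finite E" "finite V" and ends: "\<forall>e\<in>E. ta e \<in> V \<and> hb e \<in> V" and nl: "\<forall>e\<in>E. ta e \<noteq> hb e"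
    using G by (auto simp: oriented_graph_def)
  have fgE: "f \<in> E" "g \<in> E" using ds by (auto simp: delta_def)
  have nlf: "ta f \<noteq> hb f" "ta g \<noteq> hb g" using nl fgE by auto
  have ps: "p \<noteq> s" "q \<noteq> s" using pf qg nlf by auto
  have pqV: "p \<in> V" "q \<in> V" using ends fgE pf qg by auto
  have inc_s: "\<And>e. e \<in> E \<Longrightarrow> ta e = s \<or> hb e = s \<Longrightarrow> e = f \<or> e = g"
    using ds by (auto simp: delta_def)
  have fnot: "\<And>w. w \<noteq> s \<Longrightarrow> w \<noteq> p \<Longrightarrow> ta f \<noteq> w \<and> hb f \<noteq> w" using pf by auto
  have gnot: "\<And>w. w \<noteq> s \<Longrightarrow> w \<noteq> q \<Longrightarrow> ta g \<noteq> w \<and> hb g \<noteq> w" using qg by auto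
  define E' where "E' = E - {f, g}"
  define V' where "V' = V - {s}"
  define a3 :: 3 where "a3 = - inc ta hb s f * \<mu> s"
  define b3 :: 3 where "b3 = - inc ta hb s g * \<mu> s"
  define \<mu>' :: "'v \<Rightarrow> 3" where "\<mu>' w = \<mu> w - inc ta hb w f * a3 - inc ta hb w g * b3" for w
  have EE': "E = insert f (insert g E')" "f \<notin> insert g E'" "g \<notin> E'" "finite E'" using fgE fin ds(2) by (auto simp: E'_def)
  have bdE3: "\<And>(\<phi>::'e \<Rightarrow> 3) w. bd E ta hb \<phi> w = bd E' ta hb \<phi> w + inc ta hb w g * \<phi> g + inc ta hb w f * \<phi> f"
    using EE' by (simp add: bd_insert_edge)
  have bdE2: "\<And>(\<phi>::'e \<Rightarrow> 2) w. bd E ta hb \<phi> w = bd E' ta hb \<phi> w + inc ta hb w g * \<phi> g + inc ta hb w f * \<phi> f"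
    using EE' by (simp add: bd_insert_edge)
  have incf_s: "(inc ta hb s f :: 3) * inc ta hb s f = 1" "(inc ta hb s g :: 3) * inc ta hb s g = 1"
    using inc_sq[of ta f hb s] inc_sq[of ta g hb s] nlf pf qg by auto
  have inc0: "\<And>w. w \<noteq> s \<Longrightarrow> w \<noteq> p \<Longrightarrow> (inc ta hb w f::3) = 0" "\<And>w. w \<noteq> s \<Longrightarrow> w \<noteq> q \<Longrightarrow> (inc ta hb w g::3) = 0"
    using fnot gnot by (auto simp: inc_nonincident)
  have inc0': "\<And>w. w \<noteq> s \<Longrightarrow> w \<noteq> p \<Longrightarrow> (inc ta hb w f::2) = 0" "\<And>w. w \<noteq> s \<Longrightarrow> w \<noteq> q \<Longrightarrow> (inc ta hb w g::2) = 0"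
    using fnot gnot by (auto simp: inc_nonincident)
  have du': "delta E' ta hb u = delta E ta hb u" using fnot[of u] gnot[of u] sV pq by (auto simp: E'_def delta_def)
  have bdu: "\<And>(\<phi>::'e \<Rightarrow> 3). bd E ta hb \<phi> u = bd E' ta hb \<phi> u" "\<And>(\<phi>::'e \<Rightarrow> 2). bd E ta hb \<phi> u = bd E' ta hb \<phi> u"
    using bdE3 bdE2 inc0[of u] inc0'[of u] sV pq by simp_all
  have mu'u: "\<mu>' u = \<mu> u" using inc0[of u] sV pq by (simp add: \<mu>'_def)
  have mu's: "\<mu>' s = 0"
  proof -
    have "\<mu>' s = \<mu> s + (inc ta hb s f * inc ta hb s f) * \<mu> s + (inc ta hb s g * inc ta hb s g) * \<mu> s"
      by (simp add: \<mu>'_def a3_def b3_def algebra_simps)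
    also have "\<dots> = 3 * \<mu> s" using incf_s by simp
    finally show ?thesis by simp
  qed
  have I': "inst V' E' ta hb u \<mu>' \<psi>2 \<psi>3"
    unfolding inst_def
  proof (intro conjI)
    show "oriented_graph V' E' ta hb" using G inc_s by (auto simp: oriented_graph_def E'_def V'_def)
    show "two_edge_connected V' E' ta hb" unfolding E'_def V'_def
      by (rule tec_del_vertex[OF G T N uV sV(1) ds pf qg pq(1) dp dq])
    show "subcubic V' E' ta hb" using S degree_mono[OF fin(1), of E'] unfolding subcubic_def E'_def V'_def
      by (meson DiffD1 Diff_subset order_trans)
    show "u \<in> V'" using uV sV by (simp add: V'_def)
    show "degree E' ta hb u = 2" using du du' by (simp add: degree_def)
    show "sum \<mu>' V' = 0"
    proof -
      have "sum \<mu>' V = sum \<mu> V - (\<Sum>w\<in>V. inc ta hb w f) * a3 - (\<Sum>w\<in>V. inc ta hb w g) * b3"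
        by (simp add: \<mu>'_def sum_subtractf sum_distrib_right)
      also have "\<dots> = 0" using sm sum_inc_zero[OF fin(2), of ta f hb, where 'a=3] sum_inc_zero[OF fin(2), of ta g hb, where 'a=3] ends fgE by simp
      finally have "sum \<mu>' V = 0" .
      moreover have "sum \<mu>' V = \<mu>' s + sum \<mu>' V'" using sV fin by (simp add: V'_def sum.remove)
      ultimately show ?thesis using mu's by simp
    qed
    show "\<forall>w\<in>V'. \<mu>' w \<noteq> 0 \<longrightarrow> degree E' ta hb w = 2"
    proof (intro ballI impI)
      fix w assume w: "w \<in> V'" "\<mu>' w \<noteq> 0"
      have ws: "w \<noteq> s" using w by (simp add: V'_def)
      show "degree E' ta hb w = 2"
      proof (cases "w = p")
        case True
        have "delta E' ta hb w = delta E ta hb p - {f}" using True gnot[of p] ps pq by (auto simp: E'_def delta_def)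
        moreover have "f \<in> delta E ta hb p" using pf fgE by (auto simp: delta_def)
        ultimately show ?thesis using dp finite_delta[OF fin(1)] by (simp add: degree_def)
      next
        case nwp: False
        show ?thesis
        proof (cases "w = q")
          case True
          have "delta E' ta hb w = delta E ta hb q - {g}" using True fnot[of q] ps pq by (auto simp: E'_def delta_def)
          moreover have "g \<in> delta E ta hb q" using qg fgE by (auto simp: delta_def)
          ultimately show ?thesis using dq finite_delta[OF fin(1)] by (simp add: degree_def)
        next
          case False
          then have "\<mu>' w = \<mu> w" using inc0 ws nwp by (simp add: \<mu>'_def)
          then have "degree E ta hb w = 2" using ii w by (auto simp: V'_def)
          moreover have "delta E' ta hb w = delta E ta hb w" using fnot[OF ws nwp] gnot[OF ws False] by (auto simp: E'_def delta_def)
          ultimately show ?thesis by (simp add: degree_def)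
        qed
      qed
    qed
    show "bd E' ta hb \<psi>3 u = \<mu>' u" using iii bdu mu'u by simp
    show "\<mu>' u = 0 \<longrightarrow> bd E' ta hb \<psi>2 u = 0" using iv bdu mu'u by simp
    show "\<forall>e\<in>delta E' ta hb u. \<psi>2 e \<noteq> 0 \<or> \<psi>3 e \<noteq> 0" using v du' by simp
  qed
  have cE': "card E' < card E" using EE' by simp
  obtain \<phi>2' \<phi>3' where sol': "sol V' E' ta hb u \<mu>' \<psi>2 \<psi>3 \<phi>2' \<phi>3'"
    using IHP_D[OF IH cE' I'] by blast
  have s1: "\<forall>e\<in>delta E' ta hb u. \<phi>2' e = \<psi>2 e \<and> \<phi>3' e = \<psi>3 e"
    and s2: "\<forall>v\<in>V'. bd E' ta hb \<phi>3' v = \<mu>' v" and s3: "\<forall>v\<in>V'. \<mu>' v = 0 \<longrightarrow> bd E' ta hb \<phi>2' v = 0"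
    and s4: "\<forall>e\<in>E'. \<phi>2' e \<noteq> 0 \<or> \<phi>3' e \<noteq> 0" using sol' by (auto simp: sol_def)
  define \<phi>2 where "\<phi>2 = \<phi>2'(f := bd E' ta hb \<phi>2' p, g := bd E' ta hb \<phi>2' q)"
  define \<phi>3 where "\<phi>3 = \<phi>3'(f := a3, g := b3)"
  have agree2: "bd E' ta hb \<phi>2 w = bd E' ta hb \<phi>2' w" for w
    unfolding \<phi>2_def using EE' by (simp add: bd_upd_other)
  have agree3: "bd E' ta hb \<phi>3 w = bd E' ta hb \<phi>3' w" for w
    unfolding \<phi>3_def using EE' by (simp add: bd_upd_other)
  have sE': "bd E' ta hb (\<phi>::'e \<Rightarrow> 3) s = 0" for \<phi>
    by (rule bd_nonincident) (use inc_s in \<open>auto simp: E'_def\<close>)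
  have "sol V E ta hb u \<mu> \<psi>2 \<psi>3 \<phi>2 \<phi>3"
    unfolding sol_def
  proof (intro conjI ballI impI)
    fix e assume "e \<in> delta E ta hb u"
    then have "e \<noteq> f" "e \<noteq> g" "e \<in> delta E' ta hb u" using fnot[of u] gnot[of u] sV pq du' by (auto simp: delta_def)
    then show "\<phi>2 e = \<psi>2 e" "\<phi>3 e = \<psi>3 e" using s1 by (auto simp: \<phi>2_def \<phi>3_def)
  next
    fix w assume w: "w \<in> V"
    show "bd E ta hb \<phi>3 w = \<mu> w"
    proof (cases "w = s")
      case True
      have "bd E ta hb \<phi>3 w = inc ta hb s g * b3 + inc ta hb s f * a3"
        using bdE3[of \<phi>3 w] agree3 sE' True ds(2) by (simp add: \<phi>3_def)
      also have "\<dots> = - (inc ta hb s g * inc ta hb s g) * \<mu> s - (inc ta hb s f * inc ta hb s f) * \<mu> s"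
        by (simp add: a3_def b3_def algebra_simps)
      also have "\<dots> = \<mu> s" using incf_s by simp
      finally show ?thesis using True by simp
    next
      case False
      then have "w \<in> V'" using w by (simp add: V'_def)
      then show ?thesis using bdE3[of \<phi>3 w] agree3 s2 ds(2) by (simp add: \<phi>3_def \<mu>'_def)
    qed
  next
    fix w assume w: "w \<in> V" "\<mu> w = 0"
    have ws: "w \<noteq> s" using w ms by auto
    have wV': "w \<in> V'" using w ws by (simp add: V'_def)
    have base: "bd E ta hb \<phi>2 w = bd E' ta hb \<phi>2' w + inc ta hb w g * bd E' ta hb \<phi>2' q + inc ta hb w f * bd E' ta hb \<phi>2' p"
      using bdE2[of \<phi>2 w] agree2 ds(2) by (simp add: \<phi>2_def)
    show "bd E ta hb \<phi>2 w = 0"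
    proof (cases "w = p")
      case True
      moreover have "(inc ta hb p f::2) = 1" using inc2[of ta f hb p] nlf pf by auto
      ultimately show ?thesis using base inc0'(2)[OF ws] pq(1) by simp
    next
      case nwp: False
      show ?thesis
      proof (cases "w = q")
        case True
        moreover have "(inc ta hb q g::2) = 1" using inc2[of ta g hb q] nlf qg by auto
        ultimately show ?thesis using base inc0'(1)[OF ws] pq(1) by simp
      next
        case False
        have "\<mu>' w = 0" using w inc0 ws nwp False by (simp add: \<mu>'_def)
        then show ?thesis using base inc0' ws nwp False s3 wV' by simp
      qed
    qed
  next
    fix e assume "e \<in> E"
    moreover have "a3 \<noteq> 0" "b3 \<noteq> 0"
      using three_mul_nz[OF inc3_nz[of ta f hb s] ms] three_mul_nz[OF inc3_nz[of ta g hb s] ms] nlf pf qg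
      by (auto simp: a3_def b3_def)
    ultimately show "\<phi>2 e \<noteq> 0 \<or> \<phi>3 e \<noteq> 0" using s4 ds(2)
      by (cases "e = f"; cases "e = g") (auto simp: \<phi>2_def \<phi>3_def E'_def)
  qed
  then show ?thesis by (auto simp: hasSol_def)
qed




lemma three_unit_mul: "(a::3) \<noteq> 0 \<Longrightarrow> a * b = 0 \<Longrightarrow> b = 0"
  using three_cases[of a] three_cases[of b] by auto

lemma two_unit_mul: "(a::2) \<noteq> 0 \<Longrightarrow> a * b = 0 \<Longrightarrow> b = 0"
  using two_cases[of a] two_cases[of b] by auto

lemma inc2_nz: "ta e \<noteq> hb e \<Longrightarrow> ta e = v \<or> hb e = v \<Longrightarrow> (inc ta hb v e :: 2) \<noteq> 0"
  by (auto simp: inc_def)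

lemma bd_delta2:
  assumes "finite E" "delta E ta hb v = {f, g}" "f \<noteq> g"
  shows "bd E ta hb \<phi> v = inc ta hb v f * \<phi> f + inc ta hb v g * \<phi> g"
proof -
  have "bd E ta hb \<phi> v = bd {f, g} ta hb \<phi> v"
    using assms by (intro bd_restrict) (auto simp: delta_def)
  then show ?thesis using assms(3) by (simp add: bd_two)
qed

lemma red_contract:
  fixes V :: "'v set" and E :: "'e set" and \<mu> :: "'v \<Rightarrow> 3" and \<psi>2 :: "'e \<Rightarrow> 2" and \<psi>3 :: "'e \<Rightarrow> 3"
  assumes I: "inst V E ta hb u \<mu> \<psi>2 \<psi>3" and IH: "IHP (card E) V E"
    and vV: "v \<in> V" "v \<noteq> u" "p \<noteq> u" and dv: "delta E ta hb v = {f, g}" "f \<noteq> g"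
    and pf: "(ta f = v \<and> hb f = p) \<or> (hb f = v \<and> ta f = p)"
    and qg: "(ta g = v \<and> hb g = q) \<or> (hb g = v \<and> ta g = q)"
    and pq: "p \<noteq> q"
    and cond: "\<mu> v = 0 \<or> (degree E ta hb p = 2 \<and> \<mu> p \<noteq> 0)"
  shows "hasSol V E ta hb u \<mu> \<psi>2 \<psi>3"
proof -
  have G: "oriented_graph V E ta hb" and T: "two_edge_connected V E ta hb" and S: "subcubic V E ta hb"
    and uV: "u \<in> V" and du: "degree E ta hb u = 2" and iii: "bd E ta hb \<psi>3 u = \<mu> u"
    and iv: "\<mu> u = 0 \<longrightarrow> bd E ta hb \<psi>2 u = 0" and v: "\<forall>e\<in>delta E ta hb u. \<psi>2 e \<noteq> 0 \<or> \<psi>3 e \<noteq> 0"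
    and sm: "sum \<mu> V = 0" and ii: "\<forall>v\<in>V. \<mu> v \<noteq> 0 \<longrightarrow> degree E ta hb v = 2"
    using I by (auto simp: inst_def)
  have fin: "finite E" "finite V" and ends: "\<forall>e\<in>E. ta e \<in> V \<and> hb e \<in> V" and nl: "\<forall>e\<in>E. ta e \<noteq> hb e"
    using G by (auto simp: oriented_graph_def)
  have fgE: "f \<in> E" "g \<in> E" using dv by (auto simp: delta_def)
  have nlf: "ta f \<noteq> hb f" "ta g \<noteq> hb g" using nl fgE by auto
  have pv: "p \<noteq> v" "q \<noteq> v" using pf qg nlf by auto
  have pqV: "p \<in> V" "q \<in> V" using ends fgE pf qg by auto
  have inc_v: "\<And>e. e \<in> E \<Longrightarrow> ta e = v \<or> hb e = v \<Longrightarrow> e = f \<or> e = g"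
    using dv by (auto simp: delta_def)
  define r where "r w = (if w = v then p else w)" for w
  define E' where "E' = {e\<in>E. r (ta e) \<noteq> r (hb e)}"
  define ta' where "ta' = r \<circ> ta"
  define hb' where "hb' = r \<circ> hb"
  have E'eq: "E' = E - {f}"
  proof
    show "E' \<subseteq> E - {f}" using pf by (auto simp: E'_def r_def)
    show "E - {f} \<subseteq> E'"
    proof
      fix e assume e: "e \<in> E - {f}"
      show "e \<in> E'"
      proof (cases "e = g")
        case True then show ?thesis using qg pq pv fgE by (auto simp: E'_def r_def)
      next
        case False
        then have "ta e \<noteq> v" "hb e \<noteq> v" using inc_v e by auto
        then show ?thesis using e nl by (auto simp: E'_def r_def)
      qed
    qed
  qed
  have V'eq: "r ` V = V - {v}" using pqV pv by (auto simp: r_def)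
  define V' where "V' = V - {v}"
  define \<mu>' :: "'v \<Rightarrow> 3" where "\<mu>' w = (if w = p then \<mu> p + \<mu> v else \<mu> w)" for w
  have fib_p: "{w\<in>V. r w = p} = {v, p}" using vV pqV pv by (auto simp: r_def)
  have fib_o: "\<And>y. y \<in> V \<Longrightarrow> y \<noteq> v \<Longrightarrow> y \<noteq> p \<Longrightarrow> {w\<in>V. r w = y} = {y}" by (auto simp: r_def)
  have fibbd2: "\<And>(\<phi>::'e\<Rightarrow>2) y. (\<Sum>w\<in>{w\<in>V. r w = y}. bd E ta hb \<phi> w) = bd E' ta' hb' \<phi> y"
    unfolding E'_def ta'_def hb'_def by (rule bd_fiber[OF fin(2,1) ends])
  have bd_o2: "\<And>(\<phi>::'e\<Rightarrow>2) y. y \<in> V \<Longrightarrow> y \<noteq> v \<Longrightarrow> y \<noteq> p \<Longrightarrow> bd E ta hb \<phi> y = bd E' ta' hb' \<phi> y"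
  proof -
    fix \<phi> :: "'e\<Rightarrow>2" and y assume "y \<in> V" "y \<noteq> v" "y \<noteq> p"
    then show "bd E ta hb \<phi> y = bd E' ta' hb' \<phi> y" using fibbd2[of \<phi> y] fib_o[of y] by simp
  qed
  have bd_p2: "\<And>(\<phi>::'e\<Rightarrow>2). bd E ta hb \<phi> v + bd E ta hb \<phi> p = bd E' ta' hb' \<phi> p"
    using fibbd2[of _ p] fib_p pv by simp
  have fibbd3: "\<And>(\<phi>::'e\<Rightarrow>3) y. (\<Sum>w\<in>{w\<in>V. r w = y}. bd E ta hb \<phi> w) = bd E' ta' hb' \<phi> y"
    unfolding E'_def ta'_def hb'_def by (rule bd_fiber[OF fin(2,1) ends])
  have bd_o3: "\<And>(\<phi>::'e\<Rightarrow>3) y. y \<in> V \<Longrightarrow> y \<noteq> v \<Longrightarrow> y \<noteq> p \<Longrightarrow> bd E ta hb \<phi> y = bd E' ta' hb' \<phi> y"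
  proof -
    fix \<phi> :: "'e\<Rightarrow>3" and y assume "y \<in> V" "y \<noteq> v" "y \<noteq> p"
    then show "bd E ta hb \<phi> y = bd E' ta' hb' \<phi> y" using fibbd3[of \<phi> y] fib_o[of y] by simp
  qed
  have bd_p3: "\<And>(\<phi>::'e\<Rightarrow>3). bd E ta hb \<phi> v + bd E ta hb \<phi> p = bd E' ta' hb' \<phi> p"
    using fibbd3[of _ p] fib_p pv by simp
  have delta_o: "\<And>y. y \<noteq> v \<Longrightarrow> y \<noteq> p \<Longrightarrow> delta E' ta' hb' y = delta E ta hb y"
    using pf by (auto simp: delta_def E'eq ta'_def hb'_def r_def)
  have delta_p: "delta E' ta' hb' p = insert g (delta E ta hb p - {f})"
  proof
    show "delta E' ta' hb' p \<subseteq> insert g (delta E ta hb p - {f})"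
      using inc_v by (auto simp: delta_def E'eq ta'_def hb'_def r_def split: if_splits)
    show "insert g (delta E ta hb p - {f}) \<subseteq> delta E' ta' hb' p"
      using qg fgE dv(2) by (auto simp: delta_def E'eq ta'_def hb'_def r_def)
  qed
  have gp: "g \<notin> delta E ta hb p" using qg pq pv by (auto simp: delta_def)
  have fp: "f \<in> delta E ta hb p" using pf fgE by (auto simp: delta_def)
  have deg_p: "degree E' ta' hb' p = degree E ta hb p"
  proof -
    have fd: "finite (delta E ta hb p)" by (rule finite_delta[OF fin(1)])
    have "card (insert g (delta E ta hb p - {f})) = Suc (card (delta E ta hb p - {f}))"
      using gp fd by simp
    also have "\<dots> = card (delta E ta hb p)" using fp fd card_Suc_Diff1 by metis
    finally show ?thesis unfolding degree_def delta_p .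
  qed
  have deg_o: "\<And>y. y \<noteq> v \<Longrightarrow> y \<noteq> p \<Longrightarrow> degree E' ta' hb' y = degree E ta hb y"
    using delta_o by (simp add: degree_def)
  have I': "inst V' E' ta' hb' u \<mu>' \<psi>2 \<psi>3"
    unfolding inst_def
  proof (intro conjI)
    show "oriented_graph V' E' ta' hb'"
      using oriented_image[OF G, of r] V'eq unfolding E'_def ta'_def hb'_def V'_def by simp
    show "two_edge_connected V' E' ta' hb'"
      using tec_image[OF T, of r] V'eq unfolding E'_def ta'_def hb'_def V'_def by simp
    show "subcubic V' E' ta' hb'"
      unfolding subcubic_def
    proof
      fix w assume "w \<in> V'"
      then show "degree E' ta' hb' w \<le> 3" using S deg_p deg_o pqV by (cases "w = p") (auto simp: subcubic_def V'_def)
    qed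
    show "u \<in> V'" using uV vV by (simp add: V'_def)
    show "degree E' ta' hb' u = 2" using du deg_o vV by simp
    show "sum \<mu>' V' = 0"
    proof -
      have "sum \<mu> V = \<mu> v + sum \<mu> V'" using vV fin by (simp add: V'_def sum.remove)
      moreover have "sum \<mu> V' = \<mu> p + sum \<mu> (V' - {p})" using pqV pv fin by (simp add: V'_def sum.remove)
      moreover have "sum \<mu>' V' = \<mu>' p + sum \<mu>' (V' - {p})" using pqV pv fin by (simp add: V'_def sum.remove)
      moreover have "sum \<mu>' (V' - {p}) = sum \<mu> (V' - {p})" by (rule sum.cong) (auto simp: \<mu>'_def)
      ultimately show ?thesis using sm by (simp add: \<mu>'_def algebra_simps)
    qed
    show "\<forall>w\<in>V'. \<mu>' w \<noteq> 0 \<longrightarrow> degree E' ta' hb' w = 2"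
    proof (intro ballI impI)
      fix w assume w: "w \<in> V'" "\<mu>' w \<noteq> 0"
      show "degree E' ta' hb' w = 2"
      proof (cases "w = p")
        case True
        then show ?thesis using w cond deg_p ii pqV by (auto simp: \<mu>'_def)
      next
        case False
        then show ?thesis using w deg_o ii by (auto simp: \<mu>'_def V'_def)
      qed
    qed
    show "bd E' ta' hb' \<psi>3 u = \<mu>' u" using iii bd_o3[of u \<psi>3] uV vV by (simp add: \<mu>'_def)
    show "\<mu>' u = 0 \<longrightarrow> bd E' ta' hb' \<psi>2 u = 0" using iv bd_o2[of u \<psi>2] uV vV by (simp add: \<mu>'_def)
    show "\<forall>e\<in>delta E' ta' hb' u. \<psi>2 e \<noteq> 0 \<or> \<psi>3 e \<noteq> 0" using v delta_o vV by simp
  qed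
  have cE': "card E' < card E" unfolding E'eq using fgE fin by (meson card_Diff1_less)
  obtain \<phi>2' \<phi>3' where sol': "sol V' E' ta' hb' u \<mu>' \<psi>2 \<psi>3 \<phi>2' \<phi>3'"
    using IHP_D[OF IH cE' I'] by blast
  have s1: "\<forall>e\<in>delta E' ta' hb' u. \<phi>2' e = \<psi>2 e \<and> \<phi>3' e = \<psi>3 e"
    and s2: "\<forall>w\<in>V'. bd E' ta' hb' \<phi>3' w = \<mu>' w" and s3: "\<forall>w\<in>V'. \<mu>' w = 0 \<longrightarrow> bd E' ta' hb' \<phi>2' w = 0"
    and s4: "\<forall>e\<in>E'. \<phi>2' e \<noteq> 0 \<or> \<phi>3' e \<noteq> 0" using sol' by (auto simp: sol_def)
  define x3 where "x3 = inc ta hb v f * (\<mu> v - inc ta hb v g * \<phi>3' g)"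
  define x2 where "x2 = (if \<mu> v = 0 then inc ta hb v f * (- (inc ta hb v g * \<phi>2' g)) else (1::2))"
  define \<phi>2 where "\<phi>2 = \<phi>2'(f := x2)"
  define \<phi>3 where "\<phi>3 = \<phi>3'(f := x3)"
  have fE': "f \<notin> E'" "g \<in> E'" using E'eq fgE dv(2) by auto
  have agree2: "bd E' ta' hb' \<phi>2 w = bd E' ta' hb' \<phi>2' w" for w
    unfolding \<phi>2_def using fE' by (simp add: bd_upd_other)
  have agree3: "bd E' ta' hb' \<phi>3 w = bd E' ta' hb' \<phi>3' w" for w
    unfolding \<phi>3_def using fE' by (simp add: bd_upd_other)
  have sqf3: "(inc ta hb v f :: 3) * inc ta hb v f = 1" using inc_sq[of ta f hb v] nlf pf by auto
  have sqf2: "(inc ta hb v f :: 2) * inc ta hb v f = 1" using inc_sq[of ta f hb v] nlf pf by auto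
  have bdv3: "bd E ta hb \<phi>3 v = \<mu> v"
  proof -
    have "bd E ta hb \<phi>3 v = inc ta hb v f * x3 + inc ta hb v g * \<phi>3' g"
      using bd_delta2[OF fin(1) dv, where \<phi>=\<phi>3] dv(2) by (simp add: \<phi>3_def)
    also have "\<dots> = (inc ta hb v f * inc ta hb v f) * (\<mu> v - inc ta hb v g * \<phi>3' g) + inc ta hb v g * \<phi>3' g"
      by (simp add: x3_def algebra_simps)
    also have "\<dots> = \<mu> v" using sqf3 by simp
    finally show ?thesis .
  qed
  have bdv2: "\<mu> v = 0 \<Longrightarrow> bd E ta hb \<phi>2 v = 0"
  proof -
    assume m: "\<mu> v = 0"
    have "bd E ta hb \<phi>2 v = inc ta hb v f * x2 + inc ta hb v g * \<phi>2' g"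
      using bd_delta2[OF fin(1) dv, where \<phi>=\<phi>2] dv(2) by (simp add: \<phi>2_def)
    also have "\<dots> = (inc ta hb v f * inc ta hb v f) * (- (inc ta hb v g * \<phi>2' g)) + inc ta hb v g * \<phi>2' g"
      using m by (simp add: x2_def algebra_simps)
    also have "\<dots> = 0" using sqf2 by simp
    finally show ?thesis .
  qed
  have "sol V E ta hb u \<mu> \<psi>2 \<psi>3 \<phi>2 \<phi>3"
    unfolding sol_def
  proof (intro conjI ballI impI)
    fix e assume "e \<in> delta E ta hb u"
    then have "e \<noteq> f" "e \<in> delta E' ta' hb' u" using pf vV delta_o[of u] by (auto simp: delta_def)
    then show "\<phi>2 e = \<psi>2 e" "\<phi>3 e = \<psi>3 e" using s1 by (auto simp: \<phi>2_def \<phi>3_def)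
  next
    fix w assume w: "w \<in> V"
    show "bd E ta hb \<phi>3 w = \<mu> w"
    proof (cases "w = v")
      case True then show ?thesis using bdv3 by simp
    next
      case nv: False
      show ?thesis
      proof (cases "w = p")
        case True
        have "bd E ta hb \<phi>3 p = bd E' ta' hb' \<phi>3' p - bd E ta hb \<phi>3 v" using bd_p3[of \<phi>3] agree3 by (simp add: algebra_simps)
        also have "\<dots> = \<mu> p" using s2 pqV pv bdv3 by (simp add: V'_def \<mu>'_def)
        finally show ?thesis using True by simp
      next
        case False
        then show ?thesis using bd_o3[OF w nv False, of \<phi>3] agree3 s2 w nv by (simp add: V'_def \<mu>'_def)
      qed
    qed
  next
    fix w assume w: "w \<in> V" "\<mu> w = 0"
    show "bd E ta hb \<phi>2 w = 0"
    proof (cases "w = v")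
      case True then show ?thesis using bdv2 w by simp
    next
      case nv: False
      show ?thesis
      proof (cases "w = p")
        case True
        then have mv: "\<mu> v = 0" using cond w by auto
        have "bd E ta hb \<phi>2 p = bd E' ta' hb' \<phi>2' p - bd E ta hb \<phi>2 v" using bd_p2[of \<phi>2] agree2 by (simp add: algebra_simps)
        also have "\<dots> = 0" using s3 pqV pv bdv2[OF mv] mv w True by (simp add: V'_def \<mu>'_def)
        finally show ?thesis using True by simp
      next
        case False
        then show ?thesis using bd_o2[OF w(1) nv False, of \<phi>2] agree2 s3 w nv by (simp add: V'_def \<mu>'_def)
      qed
    qed
  next
    fix e assume e: "e \<in> E"
    show "\<phi>2 e \<noteq> 0 \<or> \<phi>3 e \<noteq> 0"
    proof (cases "e = f")
      case False then show ?thesis using s4 e by (auto simp: \<phi>2_def \<phi>3_def E'eq)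
    next
      case True
      show ?thesis
      proof (cases "\<mu> v = 0")
        case False then show ?thesis using True by (simp add: \<phi>2_def x2_def)
      next
        case mv: True
        show ?thesis
        proof (rule ccontr)
          assume "\<not> ?thesis"
          then have z: "x2 = 0" "x3 = 0" using True by (auto simp: \<phi>2_def \<phi>3_def)
          have "\<phi>2' g = 0"
            using z(1) mv two_unit_mul[OF inc2_nz[of ta f hb v]] two_unit_mul[OF inc2_nz[of ta g hb v]] nlf pf qg
            by (auto simp: x2_def)
          moreover have "\<phi>3' g = 0"
            using z(2) mv three_unit_mul[OF inc3_nz[of ta f hb v]] three_unit_mul[OF inc3_nz[of ta g hb v]] nlf pf qg
            by (auto simp: x3_def)
          ultimately show False using s4 fE' by auto
        qed
      qed
    qed
  qed
  then show ?thesis by (auto simp: hasSol_def)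
qed




lemma red_root:
  fixes V :: "'v set" and E :: "'e set" and \<mu> :: "'v \<Rightarrow> 3" and \<psi>2 :: "'e \<Rightarrow> 2" and \<psi>3 :: "'e \<Rightarrow> 3"
  assumes I: "inst V E ta hb u \<mu> \<psi>2 \<psi>3" and IH: "IHP (card E) V E"
    and du: "delta E ta hb u = {e1, e2}" "e1 \<noteq> e2"
    and ux: "(ta e1 = u \<and> hb e1 = x) \<or> (hb e1 = u \<and> ta e1 = x)"
    and uy: "(ta e2 = u \<and> hb e2 = y) \<or> (hb e2 = u \<and> ta e2 = y)"
    and xy: "x \<noteq> y" and dx: "delta E ta hb x = {e1, e3}" "e1 \<noteq> e3"
  shows "hasSol V E ta hb u \<mu> \<psi>2 \<psi>3"
proof -
  have G: "oriented_graph V E ta hb" and T: "two_edge_connected V E ta hb" and S: "subcubic V E ta hb"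
    and uV: "u \<in> V" and iii: "bd E ta hb \<psi>3 u = \<mu> u"
    and iv: "\<mu> u = 0 \<longrightarrow> bd E ta hb \<psi>2 u = 0" and v: "\<forall>e\<in>delta E ta hb u. \<psi>2 e \<noteq> 0 \<or> \<psi>3 e \<noteq> 0"
    and sm: "sum \<mu> V = 0" and ii: "\<forall>v\<in>V. \<mu> v \<noteq> 0 \<longrightarrow> degree E ta hb v = 2"
    using I by (auto simp: inst_def)
  have fin: "finite E" "finite V" and ends: "\<forall>e\<in>E. ta e \<in> V \<and> hb e \<in> V" and nl: "\<forall>e\<in>E. ta e \<noteq> hb e"
    using G by (auto simp: oriented_graph_def)
  have eE: "e1 \<in> E" "e2 \<in> E" "e3 \<in> E" using du dx by (auto simp: delta_def)
  have nle: "ta e1 \<noteq> hb e1" "ta e2 \<noteq> hb e2" "ta e3 \<noteq> hb e3" using nl eE by auto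
  have xu: "x \<noteq> u" "y \<noteq> u" using ux uy nle by auto
  have xyV: "x \<in> V" "y \<in> V" using ends eE ux uy by auto
  have inc_u: "\<And>e. e \<in> E \<Longrightarrow> ta e = u \<or> hb e = u \<Longrightarrow> e = e1 \<or> e = e2"
    using du by (auto simp: delta_def)
  have inc_x: "\<And>e. e \<in> E \<Longrightarrow> ta e = x \<or> hb e = x \<Longrightarrow> e = e1 \<or> e = e3"
    using dx by (auto simp: delta_def)
  have e3x: "ta e3 = x \<or> hb e3 = x" using dx by (auto simp: delta_def)
  have e23: "e3 \<noteq> e2" using e3x uy xy xu by auto
  have e3u: "ta e3 \<noteq> u" "hb e3 \<noteq> u" using inc_u[OF eE(3)] e23 dx(2) by auto
  define r where "r w = (if w = u then x else w)" for w
  define E' where "E' = {e\<in>E. r (ta e) \<noteq> r (hb e)}"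
  define ta' where "ta' = r \<circ> ta"
  define hb' where "hb' = r \<circ> hb"
  have E'eq: "E' = E - {e1}"
  proof
    show "E' \<subseteq> E - {e1}" using ux by (auto simp: E'_def r_def)
    show "E - {e1} \<subseteq> E'"
    proof
      fix e assume e: "e \<in> E - {e1}"
      show "e \<in> E'"
      proof (cases "e = e2")
        case True then show ?thesis using uy xy xu eE by (auto simp: E'_def r_def)
      next
        case False
        then have "ta e \<noteq> u" "hb e \<noteq> u" using inc_u e by auto
        then show ?thesis using e nl by (auto simp: E'_def r_def)
      qed
    qed
  qed
  have V'eq: "r ` V = V - {u}" using xyV xu by (auto simp: r_def)
  define V' where "V' = V - {u}"
  define \<mu>' :: "'v \<Rightarrow> 3" where "\<mu>' w = (if w = x then \<mu> u + \<mu> x else \<mu> w)" for w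
  have fib_p: "{w\<in>V. r w = x} = {u, x}" using uV xyV xu by (auto simp: r_def)
  have fib_o: "\<And>y. y \<in> V \<Longrightarrow> y \<noteq> u \<Longrightarrow> y \<noteq> x \<Longrightarrow> {w\<in>V. r w = y} = {y}" by (auto simp: r_def)
  have fibbd2: "\<And>(\<phi>::'e\<Rightarrow>2) y. (\<Sum>w\<in>{w\<in>V. r w = y}. bd E ta hb \<phi> w) = bd E' ta' hb' \<phi> y"
    unfolding E'_def ta'_def hb'_def by (rule bd_fiber[OF fin(2,1) ends])
  have fibbd3: "\<And>(\<phi>::'e\<Rightarrow>3) y. (\<Sum>w\<in>{w\<in>V. r w = y}. bd E ta hb \<phi> w) = bd E' ta' hb' \<phi> y"
    unfolding E'_def ta'_def hb'_def by (rule bd_fiber[OF fin(2,1) ends])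
  have bd_o2: "\<And>(\<phi>::'e\<Rightarrow>2) y. y \<in> V \<Longrightarrow> y \<noteq> u \<Longrightarrow> y \<noteq> x \<Longrightarrow> bd E ta hb \<phi> y = bd E' ta' hb' \<phi> y"
  proof -
    fix \<phi> :: "'e\<Rightarrow>2" and y assume "y \<in> V" "y \<noteq> u" "y \<noteq> x"
    then show "bd E ta hb \<phi> y = bd E' ta' hb' \<phi> y" using fibbd2[of \<phi> y] fib_o[of y] by simp
  qed
  have bd_o3: "\<And>(\<phi>::'e\<Rightarrow>3) y. y \<in> V \<Longrightarrow> y \<noteq> u \<Longrightarrow> y \<noteq> x \<Longrightarrow> bd E ta hb \<phi> y = bd E' ta' hb' \<phi> y"
  proof -
    fix \<phi> :: "'e\<Rightarrow>3" and y assume "y \<in> V" "y \<noteq> u" "y \<noteq> x"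
    then show "bd E ta hb \<phi> y = bd E' ta' hb' \<phi> y" using fibbd3[of \<phi> y] fib_o[of y] by simp
  qed
  have bd_p2: "\<And>(\<phi>::'e\<Rightarrow>2). bd E ta hb \<phi> u + bd E ta hb \<phi> x = bd E' ta' hb' \<phi> x"
    using fibbd2[of _ x] fib_p xu by simp
  have bd_p3: "\<And>(\<phi>::'e\<Rightarrow>3). bd E ta hb \<phi> u + bd E ta hb \<phi> x = bd E' ta' hb' \<phi> x"
    using fibbd3[of _ x] fib_p xu by simp
  have delta_o: "\<And>w. w \<noteq> u \<Longrightarrow> w \<noteq> x \<Longrightarrow> delta E' ta' hb' w = delta E ta hb w"
    using ux by (auto simp: delta_def E'eq ta'_def hb'_def r_def)
  have delta_x: "delta E' ta' hb' x = {e2, e3}"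
  proof
    show "delta E' ta' hb' x \<subseteq> {e2, e3}"
      using inc_u inc_x by (auto simp: delta_def E'eq ta'_def hb'_def r_def split: if_splits)
    show "{e2, e3} \<subseteq> delta E' ta' hb' x"
      using uy e3x eE e23 dx(2) du(2) by (auto simp: delta_def E'eq ta'_def hb'_def r_def)
  qed
  have deg_o: "\<And>w. w \<noteq> u \<Longrightarrow> w \<noteq> x \<Longrightarrow> degree E' ta' hb' w = degree E ta hb w"
    using delta_o by (simp add: degree_def)
  have deg_x: "degree E' ta' hb' x = 2" using delta_x e23 by (simp add: degree_def)
  define t where "t = inc ta hb x e3"
  define s1 where "s1 = inc ta hb x e1"
  define c3 :: 3 where "c3 = inc ta hb x e3 * (\<mu> x - inc ta hb x e1 * \<psi>3 e1)"
  define c2 :: 2 where "c2 = (if \<mu> x = 0 then inc ta hb x e3 * (- (inc ta hb x e1 * \<psi>2 e1))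
      else if \<mu> u + \<mu> x = 0 then inc ta hb x e3 * (- bd E ta hb \<psi>2 u - inc ta hb x e1 * \<psi>2 e1) else 1)"
  define \<psi>2' where "\<psi>2' = \<psi>2(e3 := c2)"
  define \<psi>3' where "\<psi>3' = \<psi>3(e3 := c3)"
  have sq3: "(inc ta hb x e3 :: 3) * inc ta hb x e3 = 1" "(inc ta hb x e1 :: 3) * inc ta hb x e1 = 1"
    using inc_sq[of ta e3 hb x] inc_sq[of ta e1 hb x] nle e3x ux by auto
  have sq2: "(inc ta hb x e3 :: 2) * inc ta hb x e3 = 1" "(inc ta hb x e1 :: 2) * inc ta hb x e1 = 1"
    using inc_sq[of ta e3 hb x] inc_sq[of ta e1 hb x] nle e3x ux by auto
  have bdx3: "bd E ta hb \<psi>3' x = \<mu> x"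
  proof -
    have "bd E ta hb \<psi>3' x = inc ta hb x e1 * \<psi>3 e1 + inc ta hb x e3 * c3"
      using bd_delta2[OF fin(1) dx, where \<phi>=\<psi>3'] dx(2) by (simp add: \<psi>3'_def)
    also have "\<dots> = inc ta hb x e1 * \<psi>3 e1 + (inc ta hb x e3 * inc ta hb x e3) * (\<mu> x - inc ta hb x e1 * \<psi>3 e1)"
      by (simp add: c3_def algebra_simps)
    finally show ?thesis using sq3 by simp
  qed
  have bdx2: "bd E ta hb \<psi>2' x = inc ta hb x e1 * \<psi>2 e1 + inc ta hb x e3 * c2"
    using bd_delta2[OF fin(1) dx, where \<phi>=\<psi>2'] dx(2) by (simp add: \<psi>2'_def)
  have bdx2a: "\<mu> x = 0 \<Longrightarrow> bd E ta hb \<psi>2' x = 0"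
  proof -
    assume m: "\<mu> x = 0"
    have "bd E ta hb \<psi>2' x = inc ta hb x e1 * \<psi>2 e1 + (inc ta hb x e3 * inc ta hb x e3) * (- (inc ta hb x e1 * \<psi>2 e1))"
      using bdx2 m by (simp add: c2_def algebra_simps)
    then show ?thesis using sq2 by simp
  qed
  have bdx2b: "\<mu> x \<noteq> 0 \<Longrightarrow> \<mu> u + \<mu> x = 0 \<Longrightarrow> bd E ta hb \<psi>2' x = - bd E ta hb \<psi>2 u"
  proof -
    assume m: "\<mu> x \<noteq> 0" "\<mu> u + \<mu> x = 0"
    have "bd E ta hb \<psi>2' x = inc ta hb x e1 * \<psi>2 e1 + (inc ta hb x e3 * inc ta hb x e3) * (- bd E ta hb \<psi>2 u - inc ta hb x e1 * \<psi>2 e1)"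
      using bdx2 m by (simp add: c2_def algebra_simps)
    then show ?thesis using sq2 by simp
  qed
  have bdu_eq3: "bd E ta hb \<psi>3' u = bd E ta hb \<psi>3 u" unfolding \<psi>3'_def by (rule bd_cong) (use e3u in auto)
  have bdu_eq2: "bd E ta hb \<psi>2' u = bd E ta hb \<psi>2 u" unfolding \<psi>2'_def by (rule bd_cong) (use e3u in auto)
  have e2in: "e2 \<in> E'" "e3 \<in> E'" using E'eq eE du(2) dx(2) by auto
  have newiii: "bd E' ta' hb' \<psi>3' x = \<mu> u + \<mu> x" using bd_p3[of \<psi>3'] bdu_eq3 iii bdx3 by simp
  have newiv: "\<mu> u + \<mu> x = 0 \<Longrightarrow> bd E' ta' hb' \<psi>2' x = 0"
  proof -
    assume m: "\<mu> u + \<mu> x = 0"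
    show ?thesis
    proof (cases "\<mu> x = 0")
      case True
      then have "\<mu> u = 0" using m by simp
      then show ?thesis using bd_p2[of \<psi>2'] bdu_eq2 iv bdx2a[OF True] by simp
    next
      case False
      then show ?thesis using bd_p2[of \<psi>2'] bdu_eq2 bdx2b[OF False m] by simp
    qed
  qed
  have ta'ne: "ta' e2 \<noteq> hb' e2" "ta' e3 \<noteq> hb' e3" using e2in by (auto simp: E'_def ta'_def hb'_def)
  have e2x': "ta' e2 = x \<or> hb' e2 = x" "ta' e3 = x \<or> hb' e3 = x" using delta_x by (auto simp: delta_def)
  have I': "inst V' E' ta' hb' x \<mu>' \<psi>2' \<psi>3'"
    unfolding inst_def
  proof (intro conjI)
    show "oriented_graph V' E' ta' hb'"
      using oriented_image[OF G, of r] V'eq unfolding E'_def ta'_def hb'_def V'_def by simp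
    show "two_edge_connected V' E' ta' hb'"
      using tec_image[OF T, of r] V'eq unfolding E'_def ta'_def hb'_def V'_def by simp
    show "subcubic V' E' ta' hb'"
      unfolding subcubic_def
    proof
      fix w assume "w \<in> V'"
      then show "degree E' ta' hb' w \<le> 3" using S deg_x deg_o by (cases "w = x") (auto simp: subcubic_def V'_def)
    qed
    show "x \<in> V'" using xyV xu by (simp add: V'_def)
    show "degree E' ta' hb' x = 2" by (rule deg_x)
    show "sum \<mu>' V' = 0"
    proof -
      have "sum \<mu> V = \<mu> u + sum \<mu> V'" using uV fin by (simp add: V'_def sum.remove)
      moreover have "sum \<mu> V' = \<mu> x + sum \<mu> (V' - {x})" using xyV xu fin by (simp add: V'_def sum.remove)
      moreover have "sum \<mu>' V' = \<mu>' x + sum \<mu>' (V' - {x})" using xyV xu fin by (simp add: V'_def sum.remove)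
      moreover have "sum \<mu>' (V' - {x}) = sum \<mu> (V' - {x})" by (rule sum.cong) (auto simp: \<mu>'_def)
      ultimately show ?thesis using sm by (simp add: \<mu>'_def algebra_simps)
    qed
    show "\<forall>w\<in>V'. \<mu>' w \<noteq> 0 \<longrightarrow> degree E' ta' hb' w = 2"
    proof (intro ballI impI)
      fix w assume w: "w \<in> V'" "\<mu>' w \<noteq> 0"
      show "degree E' ta' hb' w = 2"
      proof (cases "w = x")
        case True then show ?thesis using deg_x by simp
      next
        case False then show ?thesis using w deg_o ii by (auto simp: \<mu>'_def V'_def)
      qed
    qed
    show "bd E' ta' hb' \<psi>3' x = \<mu>' x" using newiii by (simp add: \<mu>'_def)
    show "\<mu>' x = 0 \<longrightarrow> bd E' ta' hb' \<psi>2' x = 0" using newiv by (simp add: \<mu>'_def)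
    show "\<forall>e\<in>delta E' ta' hb' x. \<psi>2' e \<noteq> 0 \<or> \<psi>3' e \<noteq> 0"
    proof
      fix e assume "e \<in> delta E' ta' hb' x"
      then have "e = e2 \<or> e = e3" using delta_x by auto
      then show "\<psi>2' e \<noteq> 0 \<or> \<psi>3' e \<noteq> 0"
      proof
        assume "e = e2"
        then show ?thesis using v du e23 by (auto simp: \<psi>2'_def \<psi>3'_def)
      next
        assume e: "e = e3"
        show ?thesis
        proof (rule ccontr)
          assume "\<not> ?thesis"
          then have z: "c2 = 0" "c3 = 0" using e by (auto simp: \<psi>2'_def \<psi>3'_def)
          show False
          proof (cases "\<mu> x = 0")
            case True
            have "\<psi>2 e1 = 0"
              using z(1) True two_unit_mul[OF inc2_nz[of ta e3 hb x]] two_unit_mul[OF inc2_nz[of ta e1 hb x]] nle e3x ux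
              by (auto simp: c2_def)
            moreover have "\<psi>3 e1 = 0"
              using z(2) True three_unit_mul[OF inc3_nz[of ta e3 hb x]] three_unit_mul[OF inc3_nz[of ta e1 hb x]] nle e3x ux
              by (auto simp: c3_def)
            ultimately show False using v du by auto
          next
            case mx: False
            show False
            proof (cases "\<mu> u + \<mu> x = 0")
              case False then show False using z mx by (simp add: c2_def)
            next
              case True
              have d2: "delta E' ta' hb' x = {e2, e3}" by (rule delta_x)
              have fE': "finite E'" using fin by (simp add: E'_def)
              have "bd E' ta' hb' \<psi>3' x = inc ta' hb' x e2 * \<psi>3 e2"
                using bd_delta2[OF fE' d2 e23[symmetric], where \<phi>=\<psi>3'] z e23 by (simp add: \<psi>3'_def)
              then have a3: "inc ta' hb' x e2 * \<psi>3 e2 = 0" using newiii True by simp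
              have "bd E' ta' hb' \<psi>2' x = inc ta' hb' x e2 * \<psi>2 e2"
                using bd_delta2[OF fE' d2 e23[symmetric], where \<phi>=\<psi>2'] z e23 by (simp add: \<psi>2'_def)
              then have a2: "inc ta' hb' x e2 * \<psi>2 e2 = 0" using newiv True by simp
              have "\<psi>3 e2 = 0" using three_unit_mul[OF inc3_nz[of ta' e2 hb' x] a3] ta'ne e2x' by auto
              moreover have "\<psi>2 e2 = 0" using two_unit_mul[OF inc2_nz[of ta' e2 hb' x] a2] ta'ne e2x' by auto
              ultimately show False using v du by auto
            qed
          qed
        qed
      qed
    qed
  qed
  have cE': "card E' < card E" unfolding E'eq using eE fin by (meson card_Diff1_less)
  obtain \<phi>2' \<phi>3' where sol': "sol V' E' ta' hb' x \<mu>' \<psi>2' \<psi>3' \<phi>2' \<phi>3'"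
    using IHP_D[OF IH cE' I'] by blast
  have s1: "\<forall>e\<in>delta E' ta' hb' x. \<phi>2' e = \<psi>2' e \<and> \<phi>3' e = \<psi>3' e"
    and s2: "\<forall>w\<in>V'. bd E' ta' hb' \<phi>3' w = \<mu>' w" and s3: "\<forall>w\<in>V'. \<mu>' w = 0 \<longrightarrow> bd E' ta' hb' \<phi>2' w = 0"
    and s4: "\<forall>e\<in>E'. \<phi>2' e \<noteq> 0 \<or> \<phi>3' e \<noteq> 0" using sol' by (auto simp: sol_def)
  define \<phi>2 where "\<phi>2 = \<phi>2'(e1 := \<psi>2 e1)"
  define \<phi>3 where "\<phi>3 = \<phi>3'(e1 := \<psi>3 e1)"
  have fE': "e1 \<notin> E'" using E'eq by simp
  have agree2: "bd E' ta' hb' \<phi>2 w = bd E' ta' hb' \<phi>2' w" for w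
    unfolding \<phi>2_def using fE' by (simp add: bd_upd_other)
  have agree3: "bd E' ta' hb' \<phi>3 w = bd E' ta' hb' \<phi>3' w" for w
    unfolding \<phi>3_def using fE' by (simp add: bd_upd_other)
  have on_u2: "\<And>e. e \<in> delta E ta hb u \<Longrightarrow> \<phi>2 e = \<psi>2 e" and on_u3: "\<And>e. e \<in> delta E ta hb u \<Longrightarrow> \<phi>3 e = \<psi>3 e"
    using s1 delta_x du e23 du(2) by (auto simp: \<phi>2_def \<phi>3_def \<psi>2'_def \<psi>3'_def)
  have on_x2: "\<And>e. e \<in> delta E ta hb x \<Longrightarrow> \<phi>2 e = \<psi>2' e" and on_x3: "\<And>e. e \<in> delta E ta hb x \<Longrightarrow> \<phi>3 e = \<psi>3' e"
    using s1 delta_x dx dx(2) by (auto simp: \<phi>2_def \<phi>3_def \<psi>2'_def \<psi>3'_def)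
  have bu3: "bd E ta hb \<phi>3 u = bd E ta hb \<psi>3 u" by (rule bd_cong) (use on_u3 in \<open>auto simp: delta_def\<close>)
  have bu2: "bd E ta hb \<phi>2 u = bd E ta hb \<psi>2 u" by (rule bd_cong) (use on_u2 in \<open>auto simp: delta_def\<close>)
  have bx3: "bd E ta hb \<phi>3 x = bd E ta hb \<psi>3' x" by (rule bd_cong) (use on_x3 in \<open>auto simp: delta_def\<close>)
  have bx2: "bd E ta hb \<phi>2 x = bd E ta hb \<psi>2' x" by (rule bd_cong) (use on_x2 in \<open>auto simp: delta_def\<close>)
  have "sol V E ta hb u \<mu> \<psi>2 \<psi>3 \<phi>2 \<phi>3"
    unfolding sol_def
  proof (intro conjI ballI impI)
    fix e assume "e \<in> delta E ta hb u"
    then show "\<phi>2 e = \<psi>2 e" "\<phi>3 e = \<psi>3 e" using on_u2 on_u3 by auto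
  next
    fix w assume w: "w \<in> V"
    show "bd E ta hb \<phi>3 w = \<mu> w"
    proof (cases "w = u")
      case True then show ?thesis using bu3 iii by simp
    next
      case nu: False
      show ?thesis
      proof (cases "w = x")
        case True then show ?thesis using bx3 bdx3 by simp
      next
        case False
        then show ?thesis using bd_o3[OF w nu False, of \<phi>3] agree3 s2 w nu by (simp add: V'_def \<mu>'_def)
      qed
    qed
  next
    fix w assume w: "w \<in> V" "\<mu> w = 0"
    show "bd E ta hb \<phi>2 w = 0"
    proof (cases "w = u")
      case True then show ?thesis using bu2 iv w by simp
    next
      case nu: False
      show ?thesis
      proof (cases "w = x")
        case True then show ?thesis using bx2 bdx2a w by simp
      next
        case False
        then show ?thesis using bd_o2[OF w(1) nu False, of \<phi>2] agree2 s3 w nu by (simp add: V'_def \<mu>'_def)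
      qed
    qed
  next
    fix e assume e: "e \<in> E"
    show "\<phi>2 e \<noteq> 0 \<or> \<phi>3 e \<noteq> 0"
    proof (cases "e = e1")
      case True then show ?thesis using v du by (auto simp: \<phi>2_def \<phi>3_def)
    next
      case False then show ?thesis using s4 e by (auto simp: \<phi>2_def \<phi>3_def E'eq)
    qed
  qed
  then show ?thesis by (auto simp: hasSol_def)
qed




lemma bd_agree: "(\<And>e. e \<in> E \<Longrightarrow> \<phi> e = \<phi>' e) \<Longrightarrow> bd E ta hb \<phi> v = bd E ta hb \<phi>' v"
  unfolding bd_def by (rule sum.cong) auto

lemma red_split:
  fixes V :: "'v set" and E :: "'e set" and \<mu> :: "'v \<Rightarrow> 3" and \<psi>2 :: "'e \<Rightarrow> 2" and \<psi>3 :: "'e \<Rightarrow> 3"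
  assumes I: "inst V E ta hb u \<mu> \<psi>2 \<psi>3" and IH: "IHP (card E) V E"
    and X: "X \<subseteq> V" "u \<in> X" "card (ecut E ta hb X) \<le> 2"
    and ea: "ea \<in> E" "ta ea \<in> X" "hb ea \<in> X"
    and eb: "eb \<in> E" "ta eb \<in> V - X" "hb eb \<in> V - X"
  shows "hasSol V E ta hb u \<mu> \<psi>2 \<psi>3"
proof -
  have G: "oriented_graph V E ta hb" and T: "two_edge_connected V E ta hb" and S: "subcubic V E ta hb"
    and uV: "u \<in> V" and du: "degree E ta hb u = 2" and iii: "bd E ta hb \<psi>3 u = \<mu> u"
    and iv: "\<mu> u = 0 \<longrightarrow> bd E ta hb \<psi>2 u = 0" and v: "\<forall>e\<in>delta E ta hb u. \<psi>2 e \<noteq> 0 \<or> \<psi>3 e \<noteq> 0"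
    and sm: "sum \<mu> V = 0" and ii: "\<forall>v\<in>V. \<mu> v \<noteq> 0 \<longrightarrow> degree E ta hb v = 2"
    using I by (auto simp: inst_def)
  have fin: "finite E" "finite V" and ends: "\<forall>e\<in>E. ta e \<in> V \<and> hb e \<in> V" and nl: "\<forall>e\<in>E. ta e \<noteq> hb e"
    using G by (auto simp: oriented_graph_def)
  define B where "B = V - X"
  define b0 where "b0 = ta eb"
  define C where "C = ecut E ta hb X"
  have b0B: "b0 \<in> B" "b0 \<notin> X" "b0 \<in> V" using eb by (auto simp: B_def b0_def)
  have finC: "finite C" using fin by (simp add: C_def ecut_def)
  have finX: "finite X" "finite B" using X fin by (auto simp: B_def finite_subset)
  have VXB: "V = X \<union> B" "X \<inter> B = {}" using X by (auto simp: B_def)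
  have cardC: "card C = 2"
  proof (rule ccontr)
    assume "card C \<noteq> 2"
    then have c1: "card C \<le> 1" using X(3) by (simp add: C_def)
    have "connected_by V (E - C) ta hb" using connected_minus[OF T c1 finC] .
    then have "(u, b0) \<in> (adj (E - C) ta hb)\<^sup>*" using uV b0B unfolding connected_by_def by blast
    from cross[OF this X(2) b0B(2)] obtain e where "e \<in> E - C" "(ta e \<in> X \<and> hb e \<notin> X) \<or> (hb e \<in> X \<and> ta e \<notin> X)"
      by blast
    then show False by (auto simp: C_def ecut_def)
  qed
  define rA where "rA w = (if w \<in> B then b0 else w)" for w
  define EA where "EA = {e\<in>E. rA (ta e) \<noteq> rA (hb e)}"
  define taA where "taA = rA \<circ> ta"
  define hbA where "hbA = rA \<circ> hb"
  define VA where "VA = rA ` V"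
  have VAeq: "VA = insert b0 X" using b0B VXB by (auto simp: VA_def rA_def)
  have EAeq: "EA = {e\<in>E. \<not> (ta e \<in> B \<and> hb e \<in> B)}"
    using nl ends b0B by (auto simp: EA_def rA_def B_def)
  have CA: "C \<subseteq> EA" using ends by (auto simp: C_def ecut_def EAeq B_def)
  have fibA_X: "\<And>y. y \<in> X \<Longrightarrow> {w\<in>V. rA w = y} = {y}" using X b0B by (auto simp: rA_def B_def)
  have fibA_b: "{w\<in>V. rA w = b0} = B" using b0B by (auto simp: rA_def B_def)
  have fA2: "\<And>(\<phi>::'e\<Rightarrow>2) y. (\<Sum>w\<in>{w\<in>V. rA w = y}. bd E ta hb \<phi> w) = bd EA taA hbA \<phi> y"
    unfolding EA_def taA_def hbA_def by (rule bd_fiber[OF fin(2,1) ends])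
  have fA3: "\<And>(\<phi>::'e\<Rightarrow>3) y. (\<Sum>w\<in>{w\<in>V. rA w = y}. bd E ta hb \<phi> w) = bd EA taA hbA \<phi> y"
    unfolding EA_def taA_def hbA_def by (rule bd_fiber[OF fin(2,1) ends])
  have bdA2: "\<And>(\<phi>::'e\<Rightarrow>2) y. y \<in> X \<Longrightarrow> bd E ta hb \<phi> y = bd EA taA hbA \<phi> y"
  proof -
    fix \<phi> :: "'e\<Rightarrow>2" and y assume "y \<in> X"
    then show "bd E ta hb \<phi> y = bd EA taA hbA \<phi> y" using fA2[of \<phi> y] fibA_X[of y] by simp
  qed
  have bdA3: "\<And>(\<phi>::'e\<Rightarrow>3) y. y \<in> X \<Longrightarrow> bd E ta hb \<phi> y = bd EA taA hbA \<phi> y"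
  proof -
    fix \<phi> :: "'e\<Rightarrow>3" and y assume "y \<in> X"
    then show "bd E ta hb \<phi> y = bd EA taA hbA \<phi> y" using fA3[of \<phi> y] fibA_X[of y] by simp
  qed
  have bdAb2: "\<And>(\<phi>::'e\<Rightarrow>2). (\<Sum>w\<in>B. bd E ta hb \<phi> w) = bd EA taA hbA \<phi> b0" using fA2 fibA_b by metis
  have deltaA_X: "\<And>y. y \<in> X \<Longrightarrow> delta EA taA hbA y = delta E ta hb y"
    using b0B by (auto simp: delta_def EAeq taA_def hbA_def rA_def B_def)
  have deltaA_b: "delta EA taA hbA b0 = C"
    using ends b0B by (auto simp: delta_def EAeq taA_def hbA_def rA_def C_def ecut_def B_def)
  define \<mu>A :: "'v \<Rightarrow> 3" where "\<mu>A w = (if w = b0 then sum \<mu> B else \<mu> w)" for w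
  have sumV: "sum \<mu> V = sum \<mu> X + sum \<mu> B" using VXB finX by (simp add: sum.union_disjoint)
  have uX: "u \<noteq> b0" using X b0B by auto
  have IA: "inst VA EA taA hbA u \<mu>A \<psi>2 \<psi>3"
    unfolding inst_def
  proof (intro conjI)
    show "oriented_graph VA EA taA hbA"
      using oriented_image[OF G, of rA] unfolding EA_def taA_def hbA_def VA_def by simp
    show "two_edge_connected VA EA taA hbA"
      using tec_image[OF T, of rA] unfolding EA_def taA_def hbA_def VA_def by simp
    show "subcubic VA EA taA hbA"
      unfolding subcubic_def
    proof
      fix w assume "w \<in> VA"
      then show "degree EA taA hbA w \<le> 3"
        using S deltaA_X deltaA_b cardC X(1) by (auto simp: subcubic_def VAeq degree_def)
    qed
    show "u \<in> VA" using X by (simp add: VAeq)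
    show "degree EA taA hbA u = 2" using du deltaA_X X by (simp add: degree_def)
    show "sum \<mu>A VA = 0"
    proof -
      have "sum \<mu>A VA = \<mu>A b0 + sum \<mu>A X" using b0B finX by (simp add: VAeq)
      moreover have "sum \<mu>A X = sum \<mu> X" by (rule sum.cong) (use b0B in \<open>auto simp: \<mu>A_def\<close>)
      ultimately show ?thesis using sm sumV by (simp add: \<mu>A_def add.commute)
    qed
    show "\<forall>w\<in>VA. \<mu>A w \<noteq> 0 \<longrightarrow> degree EA taA hbA w = 2"
      using ii deltaA_X deltaA_b cardC X(1) b0B by (auto simp: VAeq \<mu>A_def degree_def)
    show "bd EA taA hbA \<psi>3 u = \<mu>A u" using iii bdA3[OF X(2)] uX by (simp add: \<mu>A_def)
    show "\<mu>A u = 0 \<longrightarrow> bd EA taA hbA \<psi>2 u = 0" using iv bdA2[OF X(2)] uX by (simp add: \<mu>A_def)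
    show "\<forall>e\<in>delta EA taA hbA u. \<psi>2 e \<noteq> 0 \<or> \<psi>3 e \<noteq> 0" using v deltaA_X X by simp
  qed
  have cEA: "card EA < card E"
  proof -
    have "EA \<subseteq> E - {eb}" using eb by (auto simp: EAeq B_def)
    then have "card EA \<le> card (E - {eb})" using fin by (intro card_mono) auto
    then show ?thesis using eb fin by (metis card_Diff1_less order_le_less_trans)
  qed
  obtain \<phi>A2 \<phi>A3 where solA: "sol VA EA taA hbA u \<mu>A \<psi>2 \<psi>3 \<phi>A2 \<phi>A3"
    using IHP_D[OF IH cEA IA] by blast
  have a1: "\<forall>e\<in>delta EA taA hbA u. \<phi>A2 e = \<psi>2 e \<and> \<phi>A3 e = \<psi>3 e"
    and a2: "\<forall>w\<in>VA. bd EA taA hbA \<phi>A3 w = \<mu>A w" and a3: "\<forall>w\<in>VA. \<mu>A w = 0 \<longrightarrow> bd EA taA hbA \<phi>A2 w = 0"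
    and a4: "\<forall>e\<in>EA. \<phi>A2 e \<noteq> 0 \<or> \<phi>A3 e \<noteq> 0" using solA by (auto simp: sol_def)
  define rB where "rB w = (if w \<in> X then u else w)" for w
  define EB where "EB = {e\<in>E. rB (ta e) \<noteq> rB (hb e)}"
  define taB where "taB = rB \<circ> ta"
  define hbB where "hbB = rB \<circ> hb"
  define VB where "VB = rB ` V"
  have VBeq: "VB = insert u B"
  proof
    show "VB \<subseteq> insert u B" by (auto simp: VB_def rB_def B_def)
    have "u \<in> VB" using X uV by (force simp: VB_def rB_def)
    moreover have "B \<subseteq> VB" by (force simp: VB_def rB_def B_def)
    ultimately show "insert u B \<subseteq> VB" by simp
  qed
  have EBeq: "EB = {e\<in>E. \<not> (ta e \<in> X \<and> hb e \<in> X)}"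
    using nl ends X by (auto simp: EB_def rB_def B_def)
  have fibB_B: "\<And>y. y \<in> B \<Longrightarrow> {w\<in>V. rB w = y} = {y}" using X by (auto simp: rB_def B_def)
  have fibB_u: "{w\<in>V. rB w = u} = X" using X by (auto simp: rB_def B_def)
  have fB2: "\<And>(\<phi>::'e\<Rightarrow>2) y. (\<Sum>w\<in>{w\<in>V. rB w = y}. bd E ta hb \<phi> w) = bd EB taB hbB \<phi> y"
    unfolding EB_def taB_def hbB_def by (rule bd_fiber[OF fin(2,1) ends])
  have fB3: "\<And>(\<phi>::'e\<Rightarrow>3) y. (\<Sum>w\<in>{w\<in>V. rB w = y}. bd E ta hb \<phi> w) = bd EB taB hbB \<phi> y"
    unfolding EB_def taB_def hbB_def by (rule bd_fiber[OF fin(2,1) ends])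
  have bdB2: "\<And>(\<phi>::'e\<Rightarrow>2) y. y \<in> B \<Longrightarrow> bd E ta hb \<phi> y = bd EB taB hbB \<phi> y"
  proof -
    fix \<phi> :: "'e\<Rightarrow>2" and y assume "y \<in> B"
    then show "bd E ta hb \<phi> y = bd EB taB hbB \<phi> y" using fB2[of \<phi> y] fibB_B[of y] by simp
  qed
  have bdB3: "\<And>(\<phi>::'e\<Rightarrow>3) y. y \<in> B \<Longrightarrow> bd E ta hb \<phi> y = bd EB taB hbB \<phi> y"
  proof -
    fix \<phi> :: "'e\<Rightarrow>3" and y assume "y \<in> B"
    then show "bd E ta hb \<phi> y = bd EB taB hbB \<phi> y" using fB3[of \<phi> y] fibB_B[of y] by simp
  qed
  have bdBu2: "\<And>(\<phi>::'e\<Rightarrow>2). (\<Sum>w\<in>X. bd E ta hb \<phi> w) = bd EB taB hbB \<phi> u" using fB2 fibB_u by metis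
  have bdBu3: "\<And>(\<phi>::'e\<Rightarrow>3). (\<Sum>w\<in>X. bd E ta hb \<phi> w) = bd EB taB hbB \<phi> u" using fB3 fibB_u by metis
  have deltaB_B: "\<And>y. y \<in> B \<Longrightarrow> delta EB taB hbB y = delta E ta hb y"
    using X by (auto simp: delta_def EBeq taB_def hbB_def rB_def B_def)
  have deltaB_u: "delta EB taB hbB u = C"
    using ends X by (auto simp: delta_def EBeq taB_def hbB_def rB_def C_def ecut_def B_def)
  define \<mu>B :: "'v \<Rightarrow> 3" where "\<mu>B w = (if w = u then sum \<mu> X else \<mu> w)" for w
  have sA3: "\<And>w. w \<in> X \<Longrightarrow> bd E ta hb \<phi>A3 w = \<mu> w"
    using bdA3 a2 b0B by (auto simp: VAeq \<mu>A_def)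
  have sumX3: "(\<Sum>w\<in>X. bd E ta hb \<phi>A3 w) = sum \<mu> X" using sA3 by (rule sum.cong[OF refl])
  have totA2: "(\<Sum>w\<in>V. bd E ta hb \<phi>A2 w) = 0" by (rule bd_total[OF fin(2,1) ends])
  have IB: "inst VB EB taB hbB u \<mu>B \<phi>A2 \<phi>A3"
    unfolding inst_def
  proof (intro conjI)
    show "oriented_graph VB EB taB hbB"
      using oriented_image[OF G, of rB] unfolding EB_def taB_def hbB_def VB_def by simp
    show "two_edge_connected VB EB taB hbB"
      using tec_image[OF T, of rB] unfolding EB_def taB_def hbB_def VB_def by simp
    show "subcubic VB EB taB hbB"
      unfolding subcubic_def
    proof
      fix w assume "w \<in> VB"
      then show "degree EB taB hbB w \<le> 3"
        using S deltaB_B deltaB_u cardC by (auto simp: subcubic_def VBeq degree_def B_def)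
    qed
    show "u \<in> VB" by (simp add: VBeq)
    show "degree EB taB hbB u = 2" using deltaB_u cardC by (simp add: degree_def)
    show "sum \<mu>B VB = 0"
    proof -
      have uB: "u \<notin> B" using X by (simp add: B_def)
      have "sum \<mu>B VB = \<mu>B u + sum \<mu>B B" using uB finX by (simp add: VBeq)
      moreover have "sum \<mu>B B = sum \<mu> B" by (rule sum.cong) (use uB in \<open>auto simp: \<mu>B_def\<close>)
      ultimately show ?thesis using sm sumV by (simp add: \<mu>B_def add.commute)
    qed
    show "\<forall>w\<in>VB. \<mu>B w \<noteq> 0 \<longrightarrow> degree EB taB hbB w = 2"
      using ii deltaB_B deltaB_u cardC by (auto simp: VBeq \<mu>B_def degree_def B_def)
    show "bd EB taB hbB \<phi>A3 u = \<mu>B u" using bdBu3[of \<phi>A3] sumX3 by (simp add: \<mu>B_def)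
    show "\<mu>B u = 0 \<longrightarrow> bd EB taB hbB \<phi>A2 u = 0"
    proof
      assume "\<mu>B u = 0"
      then have "sum \<mu> B = 0" using sm sumV by (simp add: \<mu>B_def)
      then have "\<mu>A b0 = 0" by (simp add: \<mu>A_def)
      then have "bd EA taA hbA \<phi>A2 b0 = 0" using a3 by (simp add: VAeq)
      then have "(\<Sum>w\<in>B. bd E ta hb \<phi>A2 w) = 0" using bdAb2 by simp
      moreover have "(\<Sum>w\<in>V. bd E ta hb \<phi>A2 w) = (\<Sum>w\<in>X. bd E ta hb \<phi>A2 w) + (\<Sum>w\<in>B. bd E ta hb \<phi>A2 w)"
        using VXB finX by (simp add: sum.union_disjoint)
      ultimately have "(\<Sum>w\<in>X. bd E ta hb \<phi>A2 w) = 0" using totA2 by simp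
      then show "bd EB taB hbB \<phi>A2 u = 0" using bdBu2 by simp
    qed
    show "\<forall>e\<in>delta EB taB hbB u. \<phi>A2 e \<noteq> 0 \<or> \<phi>A3 e \<noteq> 0" using a4 CA deltaB_u by auto
  qed
  have cEB: "card EB < card E"
  proof -
    have "EB \<subseteq> E - {ea}" using ea by (auto simp: EBeq)
    then have "card EB \<le> card (E - {ea})" using fin by (intro card_mono) auto
    then show ?thesis using ea fin by (metis card_Diff1_less order_le_less_trans)
  qed
  obtain \<phi>B2 \<phi>B3 where solB: "sol VB EB taB hbB u \<mu>B \<phi>A2 \<phi>A3 \<phi>B2 \<phi>B3"
    using IHP_D[OF IH cEB IB] by blast
  have b1: "\<forall>e\<in>delta EB taB hbB u. \<phi>B2 e = \<phi>A2 e \<and> \<phi>B3 e = \<phi>A3 e"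
    and b2: "\<forall>w\<in>VB. bd EB taB hbB \<phi>B3 w = \<mu>B w" and b3: "\<forall>w\<in>VB. \<mu>B w = 0 \<longrightarrow> bd EB taB hbB \<phi>B2 w = 0"
    and b4: "\<forall>e\<in>EB. \<phi>B2 e \<noteq> 0 \<or> \<phi>B3 e \<noteq> 0" using solB by (auto simp: sol_def)
  define IB where "IB = {e\<in>E. ta e \<in> B \<and> hb e \<in> B}"
  define \<phi>2 where "\<phi>2 e = (if e \<in> IB then \<phi>B2 e else \<phi>A2 e)" for e
  define \<phi>3 where "\<phi>3 e = (if e \<in> IB then \<phi>B3 e else \<phi>A3 e)" for e
  have agA2: "\<And>e. e \<in> EA \<Longrightarrow> \<phi>2 e = \<phi>A2 e" and agA3: "\<And>e. e \<in> EA \<Longrightarrow> \<phi>3 e = \<phi>A3 e"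
    by (auto simp: \<phi>2_def \<phi>3_def IB_def EAeq)
  have agB: "\<And>e. e \<in> EB \<Longrightarrow> \<phi>2 e = \<phi>B2 e \<and> \<phi>3 e = \<phi>B3 e"
  proof -
    fix e assume e: "e \<in> EB"
    show "\<phi>2 e = \<phi>B2 e \<and> \<phi>3 e = \<phi>B3 e"
    proof (cases "e \<in> IB")
      case True then show ?thesis by (auto simp: \<phi>2_def \<phi>3_def)
    next
      case False
      then have "e \<in> C" using e ends by (auto simp: EBeq IB_def C_def ecut_def B_def)
      then have "e \<in> delta EB taB hbB u" using deltaB_u by simp
      then show ?thesis using b1 False by (auto simp: \<phi>2_def \<phi>3_def)
    qed
  qed
  have agB2: "\<And>e. e \<in> EB \<Longrightarrow> \<phi>2 e = \<phi>B2 e" and agB3: "\<And>e. e \<in> EB \<Longrightarrow> \<phi>3 e = \<phi>B3 e"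
    using agB by auto
  have "sol V E ta hb u \<mu> \<psi>2 \<psi>3 \<phi>2 \<phi>3"
    unfolding sol_def
  proof (intro conjI ballI impI)
    fix e assume "e \<in> delta E ta hb u"
    then have "e \<in> delta EA taA hbA u" using deltaA_X X by simp
    moreover then have "e \<in> EA" by (simp add: delta_def)
    ultimately show "\<phi>2 e = \<psi>2 e" "\<phi>3 e = \<psi>3 e" using a1 agA2 agA3 by auto
  next
    fix w assume w: "w \<in> V"
    show "bd E ta hb \<phi>3 w = \<mu> w"
    proof (cases "w \<in> X")
      case True
      have "bd E ta hb \<phi>3 w = bd EA taA hbA \<phi>3 w" by (rule bdA3[OF True])
      also have "\<dots> = bd EA taA hbA \<phi>A3 w" by (rule bd_agree) (rule agA3)
      moreover have "\<mu>A w = \<mu> w" "w \<in> VA" using True b0B by (auto simp: \<mu>A_def VAeq)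
      ultimately show ?thesis using a2 by simp
    next
      case False
      then have wB: "w \<in> B" using w by (simp add: B_def)
      have "bd E ta hb \<phi>3 w = bd EB taB hbB \<phi>3 w" by (rule bdB3[OF wB])
      also have "\<dots> = bd EB taB hbB \<phi>B3 w" by (rule bd_agree) (rule agB3)
      moreover have "\<mu>B w = \<mu> w" "w \<in> VB" using wB X by (auto simp: \<mu>B_def VBeq B_def)
      ultimately show ?thesis using b2 by simp
    qed
  next
    fix w assume w: "w \<in> V" "\<mu> w = 0"
    show "bd E ta hb \<phi>2 w = 0"
    proof (cases "w \<in> X")
      case True
      have "bd E ta hb \<phi>2 w = bd EA taA hbA \<phi>2 w" by (rule bdA2[OF True])
      also have "\<dots> = bd EA taA hbA \<phi>A2 w" by (rule bd_agree) (rule agA2)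
      moreover have "\<mu>A w = 0" "w \<in> VA" using w True b0B by (auto simp: \<mu>A_def VAeq)
      ultimately show ?thesis using a3 by simp
    next
      case False
      then have wB: "w \<in> B" using w by (simp add: B_def)
      have "bd E ta hb \<phi>2 w = bd EB taB hbB \<phi>2 w" by (rule bdB2[OF wB])
      also have "\<dots> = bd EB taB hbB \<phi>B2 w" by (rule bd_agree) (rule agB2)
      moreover have "\<mu>B w = 0" "w \<in> VB" using w wB X by (auto simp: \<mu>B_def VBeq B_def)
      ultimately show ?thesis using b3 by simp
    qed
  next
    fix e assume e: "e \<in> E"
    show "\<phi>2 e \<noteq> 0 \<or> \<phi>3 e \<noteq> 0"
    proof (cases "e \<in> IB")
      case True
      then have "e \<in> EB" using X by (auto simp: IB_def EBeq B_def)
      then show ?thesis using b4 agB2 agB3 by auto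
    next
      case False
      then have "e \<in> EA" using e by (auto simp: IB_def EAeq)
      then show ?thesis using a4 agA2 agA3 by auto
    qed
  qed
  then show ?thesis by (auto simp: hasSol_def)
qed




lemma other_form: "ta e \<noteq> hb e \<Longrightarrow> ta e = w \<or> hb e = w \<Longrightarrow>
   (ta e = w \<and> hb e = other ta hb w e) \<or> (hb e = w \<and> ta e = other ta hb w e)"
  by (auto simp: other_def)

lemma deg2_struct:
  assumes G: "oriented_graph V E ta hb" and T: "two_edge_connected V E ta hb"
    and S: "subcubic V E ta hb" and w: "w \<in> V" "degree E ta hb w = 2" and f: "f \<in> delta E ta hb w"
    and abc: "a \<in> V" "b \<in> V" "c \<in> V" "a \<noteq> b" "a \<noteq> c" "b \<noteq> c"
  shows "\<exists>g. delta E ta hb w = {f, g} \<and> f \<noteq> g \<and> other ta hb w g \<noteq> other ta hb w f"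
proof -
  have "card (delta E ta hb w) = 2" using w by (simp add: degree_def)
  then obtain g1 g2 where g: "delta E ta hb w = {g1, g2}" "g1 \<noteq> g2" by (meson card_2_iff)
  then obtain g where g': "delta E ta hb w = {f, g}" "f \<noteq> g" using f by auto
  have "other ta hb w g \<noteq> other ta hb w f"
  proof
    assume same: "other ta hb w g = other ta hb w f"
    have "\<And>z. z \<in> V \<Longrightarrow> z = w \<or> z = other ta hb w f"
      using deg2_nbrs[OF G T S w(1) g'(1) g'(2) same[symmetric]] .
    then show False using abc by metis
  qed
  then show ?thesis using g' by blast
qed

lemma base_case:
  fixes V :: "'v set" and E :: "'e set" and \<mu> :: "'v \<Rightarrow> 3" and \<psi>2 :: "'e \<Rightarrow> 2" and \<psi>3 :: "'e \<Rightarrow> 3"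
  assumes I: "inst V E ta hb u \<mu> \<psi>2 \<psi>3" and Eu: "E \<subseteq> delta E ta hb u"
  shows "hasSol V E ta hb u \<mu> \<psi>2 \<psi>3"
proof -
  have G: "oriented_graph V E ta hb" and T: "two_edge_connected V E ta hb" and S: "subcubic V E ta hb"
    and uV: "u \<in> V" and du: "degree E ta hb u = 2" and iii: "bd E ta hb \<psi>3 u = \<mu> u"
    and iv: "\<mu> u = 0 \<longrightarrow> bd E ta hb \<psi>2 u = 0" and v: "\<forall>e\<in>delta E ta hb u. \<psi>2 e \<noteq> 0 \<or> \<psi>3 e \<noteq> 0"
    and sm: "sum \<mu> V = 0"
    using I by (auto simp: inst_def)
  have fin: "finite E" "finite V" and ends: "\<forall>e\<in>E. ta e \<in> V \<and> hb e \<in> V" and nl: "\<forall>e\<in>E. ta e \<noteq> hb e"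
    using G by (auto simp: oriented_graph_def)
  have Edu: "E = delta E ta hb u" using Eu by (auto simp: delta_def)
  obtain e1 e2 where e12: "delta E ta hb u = {e1, e2}" "e1 \<noteq> e2" using du by (auto simp: degree_def card_2_iff)
  define x where "x = other ta hb u e1"
  have eE: "e1 \<in> E" "e2 \<in> E" using e12 by (auto simp: delta_def)
  have e1u: "ta e1 = u \<or> hb e1 = u" "ta e2 = u \<or> hb e2 = u" using e12 by (auto simp: delta_def)
  have f1: "(ta e1 = u \<and> hb e1 = x) \<or> (hb e1 = u \<and> ta e1 = x)" using other_form[of ta e1 hb u] nl eE e1u by (simp add: x_def)
  have xV: "x \<in> V" "x \<noteq> u" using f1 ends eE nl by auto
  have "2 \<le> degree E ta hb x" using deg_ge2[OF G T xV(1) uV xV(2)[symmetric]] .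
  moreover have "delta E ta hb x \<subseteq> {e1, e2}" using Edu e12 by (auto simp: delta_def)
  ultimately have dx: "delta E ta hb x = {e1, e2}"
  proof -
    assume a: "2 \<le> degree E ta hb x" "delta E ta hb x \<subseteq> {e1, e2}"
    have "card {e1, e2} \<le> card (delta E ta hb x)" using a(1) e12(2) by (simp add: degree_def)
    then show ?thesis using card_seteq[OF _ a(2)] by simp
  qed
  have f2: "(ta e2 = u \<and> hb e2 = x) \<or> (hb e2 = u \<and> ta e2 = x)" using dx e1u xV by (auto simp: delta_def)
  have Vux: "V = {u, x}"
  proof
    show "{u, x} \<subseteq> V" using uV xV by auto
    show "V \<subseteq> {u, x}"
    proof
      fix w assume w: "w \<in> V"
      show "w \<in> {u, x}"
      proof (rule ccontr)
        assume nw: "w \<notin> {u, x}"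
        have "2 \<le> degree E ta hb w" using deg_ge2[OF G T w uV] nw by auto
        moreover have "delta E ta hb w = {}" using Edu e12 f1 f2 nw by (auto simp: delta_def)
        ultimately show False by (simp add: degree_def)
      qed
    qed
  qed
  have tot3: "bd E ta hb \<psi>3 u + bd E ta hb \<psi>3 x = 0" using bd_total[OF fin(2,1) ends, of \<psi>3] xV by (simp add: Vux)
  have tot2: "bd E ta hb \<psi>2 u + bd E ta hb \<psi>2 x = 0" using bd_total[OF fin(2,1) ends, of \<psi>2] xV by (simp add: Vux)
  have smu: "\<mu> u + \<mu> x = 0" using sm xV by (simp add: Vux)
  have "sol V E ta hb u \<mu> \<psi>2 \<psi>3 \<psi>2 \<psi>3"
    unfolding sol_def
  proof (intro conjI ballI impI)
    fix w assume "w \<in> V"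
    then have "w = u \<or> w = x" by (simp add: Vux)
    then show "bd E ta hb \<psi>3 w = \<mu> w"
    proof
      assume "w = x"
      then show ?thesis using tot3 iii smu by (metis add.commute add_left_cancel)
    qed (use iii in simp)
  next
    fix w assume "w \<in> V" "\<mu> w = 0"
    then have "w = u \<or> w = x" by (simp add: Vux)
    then show "bd E ta hb \<psi>2 w = 0"
    proof
      assume wx: "w = x"
      then have "\<mu> u = 0" using \<open>\<mu> w = 0\<close> smu by simp
      then show ?thesis using tot2 iv wx by simp
    qed (use iv \<open>\<mu> w = 0\<close> in simp)
  next
    fix e assume "e \<in> E"
    then show "\<psi>2 e \<noteq> 0 \<or> \<psi>3 e \<noteq> 0" using v Edu by auto
  qed auto
  then show ?thesis by (auto simp: hasSol_def)
qed




lemma other_eq: "ta e \<noteq> hb e \<Longrightarrow> (ta e = a \<and> hb e = b) \<or> (hb e = a \<and> ta e = b) \<Longrightarrow> other ta hb a e = b"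
  by (auto simp: other_def)

lemma form_sym: "(ta e = a \<and> hb e = b) \<or> (hb e = a \<and> ta e = b) \<Longrightarrow> (ta e = b \<and> hb e = a) \<or> (hb e = b \<and> ta e = a)"
  by auto

lemma step:
  fixes V :: "'v set" and E :: "'e set" and \<mu> :: "'v \<Rightarrow> 3" and \<psi>2 :: "'e \<Rightarrow> 2" and \<psi>3 :: "'e \<Rightarrow> 3"
  assumes I: "inst V E ta hb u \<mu> \<psi>2 \<psi>3" and IH: "IHP (card E) V E"
  shows "hasSol V E ta hb u \<mu> \<psi>2 \<psi>3"
proof -
  have G: "oriented_graph V E ta hb" and T: "two_edge_connected V E ta hb" and S: "subcubic V E ta hb"
    and uV: "u \<in> V" and du: "degree E ta hb u = 2"
    and sm: "sum \<mu> V = 0" and ii: "\<forall>v\<in>V. \<mu> v \<noteq> 0 \<longrightarrow> degree E ta hb v = 2"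
    using I by (auto simp: inst_def)
  have fin: "finite E" "finite V" and ends: "\<forall>e\<in>E. ta e \<in> V \<and> hb e \<in> V" and nl: "\<forall>e\<in>E. ta e \<noteq> hb e"
    using G by (auto simp: oriented_graph_def)
  obtain e1 e2 where e12: "delta E ta hb u = {e1, e2}" "e1 \<noteq> e2" using du by (auto simp: degree_def card_2_iff)
  show ?thesis
  proof (cases "E \<subseteq> delta E ta hb u")
    case True then show ?thesis by (rule base_case[OF I])
  next
    case False
    then obtain e0 where e0: "e0 \<in> E" "e0 \<notin> delta E ta hb u" by blast
    then have e0u: "ta e0 \<noteq> u" "hb e0 \<noteq> u" by (auto simp: delta_def)
    have three: "ta e0 \<in> V" "hb e0 \<in> V" "ta e0 \<noteq> hb e0" using ends nl e0 by auto
    have D2: "\<And>w f. w \<in> V \<Longrightarrow> degree E ta hb w = 2 \<Longrightarrow> f \<in> delta E ta hb w \<Longrightarrow>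
        \<exists>g. delta E ta hb w = {f, g} \<and> f \<noteq> g \<and> other ta hb w g \<noteq> other ta hb w f"
      using deg2_struct[OF G T S _ _ _ three(1,2) uV three(3) e0u] by blast
    have degb: "\<And>w. w \<in> V \<Longrightarrow> w \<noteq> u \<Longrightarrow> 2 \<le> degree E ta hb w \<and> degree E ta hb w \<le> 3"
      using deg_ge2[OF G T _ uV] S by (auto simp: subcubic_def)
    have inc_u: "\<And>e. e \<in> E \<Longrightarrow> ta e = u \<or> hb e = u \<Longrightarrow> e = e1 \<or> e = e2"
      using e12 by (auto simp: delta_def)
    have eE: "e1 \<in> E" "e2 \<in> E" using e12 by (auto simp: delta_def)
    show ?thesis
    proof (cases "ntc V E ta hb u")
      case True
      then obtain X where X: "X \<subseteq> V" "u \<in> X" "card (ecut E ta hb X) \<le> 2"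
        and ea: "\<exists>e\<in>E. ta e \<in> X \<and> hb e \<in> X" and eb: "\<exists>e\<in>E. ta e \<in> V - X \<and> hb e \<in> V - X"
        unfolding ntc_def by blast
      from ea obtain ea where ea: "ea \<in> E" "ta ea \<in> X" "hb ea \<in> X" by blast
      from eb obtain eb where eb: "eb \<in> E" "ta eb \<in> V - X" "hb eb \<in> V - X" by blast
      show ?thesis by (rule red_split[OF I IH X ea eb])
    next
      case N: False
      define x where "x = other ta hb u e1"
      define y where "y = other ta hb u e2"
      have e1u: "ta e1 = u \<or> hb e1 = u" "ta e2 = u \<or> hb e2 = u" using e12 by (auto simp: delta_def)
      have fx: "(ta e1 = u \<and> hb e1 = x) \<or> (hb e1 = u \<and> ta e1 = x)" using other_form[of ta e1 hb u] nl eE e1u by (simp add: x_def)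
      have fy: "(ta e2 = u \<and> hb e2 = y) \<or> (hb e2 = u \<and> ta e2 = y)" using other_form[of ta e2 hb u] nl eE e1u by (simp add: y_def)
      have xyV: "x \<in> V" "y \<in> V" "x \<noteq> u" "y \<noteq> u" using fx fy ends eE nl by auto
      have xy: "x \<noteq> y"
      proof -
        obtain g where g: "delta E ta hb u = {e1, g}" "e1 \<noteq> g" "other ta hb u g \<noteq> other ta hb u e1"
          using D2[OF uV du, of e1] e12 by auto
        have "g = e2" using g e12 by auto
        then show ?thesis using g by (simp add: x_def y_def)
      qed
      have e1x: "e1 \<in> delta E ta hb x" "e2 \<in> delta E ta hb y" using fx fy eE by (auto simp: delta_def)
      show ?thesis
      proof (cases "degree E ta hb x = 2")
        case True
        obtain e3 where e3: "delta E ta hb x = {e1, e3}" "e1 \<noteq> e3" using D2[OF xyV(1) True e1x(1)] by blast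
        show ?thesis by (rule red_root[OF I IH e12 fx fy xy e3])
      next
        case nx: False
        show ?thesis
        proof (cases "degree E ta hb y = 2")
          case True
          obtain e3 where e3: "delta E ta hb y = {e2, e3}" "e2 \<noteq> e3" using D2[OF xyV(2) True e1x(2)] by blast
          have e21: "delta E ta hb u = {e2, e1}" "e2 \<noteq> e1" using e12 by auto
          show ?thesis by (rule red_root[OF I IH e21 fy fx xy[symmetric] e3])
        next
          case ny: False
          have nbr_u: "\<And>w e. e \<in> E \<Longrightarrow> (ta e = w \<and> hb e = u) \<or> (hb e = w \<and> ta e = u) \<Longrightarrow> w = x \<or> w = y"
          proof -
            fix w e assume a: "e \<in> E" "(ta e = w \<and> hb e = u) \<or> (hb e = w \<and> ta e = u)"
            then have "e = e1 \<or> e = e2" using inc_u by auto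
            then show "w = x \<or> w = y" using a fx fy by auto
          qed
          show ?thesis
          proof (cases "\<exists>v p f g q. v \<in> V \<and> v \<noteq> u \<and> p \<noteq> u \<and> delta E ta hb v = {f, g} \<and> f \<noteq> g
              \<and> ((ta f = v \<and> hb f = p) \<or> (hb f = v \<and> ta f = p))
              \<and> ((ta g = v \<and> hb g = q) \<or> (hb g = v \<and> ta g = q)) \<and> p \<noteq> q
              \<and> (\<mu> v = 0 \<or> (degree E ta hb p = 2 \<and> \<mu> p \<noteq> 0))")
            case True
            then obtain v p f g q where c: "v \<in> V" "v \<noteq> u" "p \<noteq> u" "delta E ta hb v = {f, g}" "f \<noteq> g"
              "(ta f = v \<and> hb f = p) \<or> (hb f = v \<and> ta f = p)"
              "(ta g = v \<and> hb g = q) \<or> (hb g = v \<and> ta g = q)" "p \<noteq> q"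
              "\<mu> v = 0 \<or> (degree E ta hb p = 2 \<and> \<mu> p \<noteq> 0)" by blast
            show ?thesis by (rule red_contract[OF I IH c(1,2,3) c(4,5) c(6,7,8,9)])
          next
            case NC: False
            have NCr: "\<And>v p f g q. v \<in> V \<Longrightarrow> v \<noteq> u \<Longrightarrow> p \<noteq> u \<Longrightarrow> delta E ta hb v = {f, g} \<Longrightarrow> f \<noteq> g
              \<Longrightarrow> (ta f = v \<and> hb f = p) \<or> (hb f = v \<and> ta f = p)
              \<Longrightarrow> (ta g = v \<and> hb g = q) \<or> (hb g = v \<and> ta g = q) \<Longrightarrow> p \<noteq> q
              \<Longrightarrow> (\<mu> v = 0 \<or> (degree E ta hb p = 2 \<and> \<mu> p \<noteq> 0)) \<Longrightarrow> False"
              using NC by blast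
            show ?thesis
            proof (cases "\<exists>s f g p q. s \<in> V \<and> s \<noteq> u \<and> delta E ta hb s = {f, g} \<and> f \<noteq> g
                \<and> ((ta f = s \<and> hb f = p) \<or> (hb f = s \<and> ta f = p))
                \<and> ((ta g = s \<and> hb g = q) \<or> (hb g = s \<and> ta g = q)) \<and> p \<noteq> q \<and> p \<noteq> u \<and> q \<noteq> u
                \<and> degree E ta hb p = 3 \<and> degree E ta hb q = 3 \<and> \<mu> s \<noteq> 0")
              case True
              then obtain s f g p q where c: "s \<in> V" "s \<noteq> u" "delta E ta hb s = {f, g}" "f \<noteq> g"
                "(ta f = s \<and> hb f = p) \<or> (hb f = s \<and> ta f = p)"
                "(ta g = s \<and> hb g = q) \<or> (hb g = s \<and> ta g = q)" "p \<noteq> q" "p \<noteq> u" "q \<noteq> u"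
                "degree E ta hb p = 3" "degree E ta hb q = 3" "\<mu> s \<noteq> 0" by blast
              show ?thesis by (rule red_vertex[OF I IH N c])
            next
              case NV: False
              have NVr: "\<And>s f g p q. s \<in> V \<Longrightarrow> s \<noteq> u \<Longrightarrow> delta E ta hb s = {f, g} \<Longrightarrow> f \<noteq> g
                \<Longrightarrow> (ta f = s \<and> hb f = p) \<or> (hb f = s \<and> ta f = p)
                \<Longrightarrow> (ta g = s \<and> hb g = q) \<or> (hb g = s \<and> ta g = q) \<Longrightarrow> p \<noteq> q \<Longrightarrow> p \<noteq> u \<Longrightarrow> q \<noteq> u
                \<Longrightarrow> degree E ta hb p = 3 \<Longrightarrow> degree E ta hb q = 3 \<Longrightarrow> \<mu> s \<noteq> 0 \<Longrightarrow> False"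
                using NV by blast
              have all3: "\<And>w. w \<in> V \<Longrightarrow> w \<noteq> u \<Longrightarrow> degree E ta hb w = 3"
              proof (rule ccontr)
                fix w assume w: "w \<in> V" "w \<noteq> u" "degree E ta hb w \<noteq> 3"
                then have dw: "degree E ta hb w = 2" using degb[OF w(1,2)] by auto
                then have "delta E ta hb w \<noteq> {}" by (auto simp: degree_def)
                then obtain f where f: "f \<in> delta E ta hb w" by blast
                obtain g where g: "delta E ta hb w = {f, g}" "f \<noteq> g" "other ta hb w g \<noteq> other ta hb w f"
                  using D2[OF w(1) dw f] by blast
                define p where "p = other ta hb w f"
                define q where "q = other ta hb w g"
                have fgE: "f \<in> E" "g \<in> E" using g by (auto simp: delta_def)
                have fw: "ta f = w \<or> hb f = w" "ta g = w \<or> hb g = w" using g by (auto simp: delta_def)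
                have pf: "(ta f = w \<and> hb f = p) \<or> (hb f = w \<and> ta f = p)"
                  using other_form[of ta f hb w] nl fgE fw by (simp add: p_def)
                have qg: "(ta g = w \<and> hb g = q) \<or> (hb g = w \<and> ta g = q)"
                  using other_form[of ta g hb w] nl fgE fw by (simp add: q_def)
                have pq: "p \<noteq> q" using g by (simp add: p_def q_def)
                have pqV: "p \<in> V" "q \<in> V" "p \<noteq> w" "q \<noteq> w" using pf qg ends fgE nl by auto
                have pu: "p \<noteq> u"
                proof
                  assume "p = u"
                  then have "w = x \<or> w = y" using nbr_u[OF fgE(1)] pf by auto
                  then show False using nx ny dw by auto
                qed
                have qu: "q \<noteq> u"
                proof
                  assume "q = u"
                  then have "w = x \<or> w = y" using nbr_u[OF fgE(2)] qg by auto
                  then show False using nx ny dw by auto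
                qed
                have mw: "\<mu> w \<noteq> 0" using NCr[OF w(1,2) pu g(1,2) pf qg pq] by blast
                have dp: "degree E ta hb p = 3"
                proof (rule ccontr)
                  assume "degree E ta hb p \<noteq> 3"
                  then have dp2: "degree E ta hb p = 2" using degb[OF pqV(1) pu] by auto
                  show False
                  proof (cases "\<mu> p = 0")
                    case False
                    then show False using NCr[OF w(1,2) pu g(1,2) pf qg pq] dp2 by blast
                  next
                    case True
                    have fp: "f \<in> delta E ta hb p" using pf fgE by (auto simp: delta_def)
                    obtain h where h: "delta E ta hb p = {f, h}" "f \<noteq> h" "other ta hb p h \<noteq> other ta hb p f"
                      using D2[OF pqV(1) dp2 fp] by blast
                    have hE: "h \<in> E" "ta h = p \<or> hb h = p" using h by (auto simp: delta_def)
                    have opf: "other ta hb p f = w" using other_eq[of ta f hb p w] pf nl fgE by auto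
                    have ph: "(ta h = p \<and> hb h = other ta hb p h) \<or> (hb h = p \<and> ta h = other ta hb p h)"
                      using other_form[of ta h hb p] nl hE by simp
                    have pf': "(ta f = p \<and> hb f = w) \<or> (hb f = p \<and> ta f = w)" using pf by auto
                    show False using NCr[OF pqV(1) pu w(2) h(1,2) pf' ph] h(3) opf True by auto
                  qed
                qed
                have dq: "degree E ta hb q = 3"
                proof (rule ccontr)
                  assume "degree E ta hb q \<noteq> 3"
                  then have dq2: "degree E ta hb q = 2" using degb[OF pqV(2) qu] by auto
                  have gf: "delta E ta hb w = {g, f}" "g \<noteq> f" using g by auto
                  show False
                  proof (cases "\<mu> q = 0")
                    case False
                    then show False using NCr[OF w(1,2) qu gf qg pf pq[symmetric]] dq2 by blast
                  next
                    case True
                    have gq: "g \<in> delta E ta hb q" using qg fgE by (auto simp: delta_def)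
                    obtain h where h: "delta E ta hb q = {g, h}" "g \<noteq> h" "other ta hb q h \<noteq> other ta hb q g"
                      using D2[OF pqV(2) dq2 gq] by blast
                    have hE: "h \<in> E" "ta h = q \<or> hb h = q" using h by (auto simp: delta_def)
                    have oqg: "other ta hb q g = w" using other_eq[of ta g hb q w] qg nl fgE by auto
                    have qh: "(ta h = q \<and> hb h = other ta hb q h) \<or> (hb h = q \<and> ta h = other ta hb q h)"
                      using other_form[of ta h hb q] nl hE by simp
                    have qg': "(ta g = q \<and> hb g = w) \<or> (hb g = q \<and> ta g = w)" using qg by auto
                    show False using NCr[OF pqV(2) qu w(2) h(1,2) qg' qh] h(3) oqg True by auto
                  qed
                qed
                show False by (rule NVr[OF w(1,2) g(1,2) pf qg pq pu qu dp dq mw])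
              qed
              have mu0: "\<forall>v\<in>V. \<mu> v = 0"
              proof
                fix v assume v: "v \<in> V"
                have others: "\<And>w. w \<in> V - {u} \<Longrightarrow> \<mu> w = 0" using ii all3 by fastforce
                show "\<mu> v = 0"
                proof (cases "v = u")
                  case False then show ?thesis using others v by simp
                next
                  case True
                  have "sum \<mu> V = \<mu> u + sum \<mu> (V - {u})" using uV fin by (simp add: sum.remove)
                  moreover have "sum \<mu> (V - {u}) = 0" using others by simp
                  ultimately show ?thesis using sm True by simp
                qed
              qed
              show ?thesis by (rule red_edge[OF I IH N e0(1) e0u all3[OF three(1) e0u(1)] all3[OF three(2) e0u(2)] mu0])
            qed
          qed
        qed
      qed
    qed
  qed
qed

lemma main_inst:
  fixes V :: "'v set" and E :: "'e set" and \<mu> :: "'v \<Rightarrow> 3" and \<psi>2 :: "'e \<Rightarrow> 2" and \<psi>3 :: "'e \<Rightarrow> 3"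
  assumes "inst V E ta hb u \<mu> \<psi>2 \<psi>3"
  shows "hasSol V E ta hb u \<mu> \<psi>2 \<psi>3"
  using assms
proof (induction "card E" arbitrary: V E ta hb u \<mu> \<psi>2 \<psi>3 rule: less_induct)
  case less
  have "IHP (card E) V E" unfolding IHP_def
  proof (intro allI impI)
    fix V' :: "'v set" and E' :: "'e set" and ta' hb' u' \<mu>' \<psi>2' \<psi>3'
    assume "card E' < card E" "inst V' E' ta' hb' u' \<mu>' \<psi>2' \<psi>3'"
    then show "hasSol V' E' ta' hb' u' \<mu>' \<psi>2' \<psi>3'" using less.hyps by blast
  qed
  then show ?case by (rule step[OF less.prems])
qed



theorem mainTheorem2:
  fixes V :: "'v set" and E :: "'e set" and tail head :: "'e \<Rightarrow> 'v" and u :: 'v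
    and \<mu> :: "'v \<Rightarrow> 3" and \<psi>\<^sub>2 :: "'e \<Rightarrow> 2" and \<psi>\<^sub>3 :: "'e \<Rightarrow> 3"
  assumes G: "oriented_graph V E tail head"
    and tec: "two_edge_connected V E tail head"
    and sub: "subcubic V E tail head"
    and u: "u \<in> V" "degree E tail head u = 2"
    and i: "(\<Sum>v\<in>V. \<mu> v) = 0"
    and ii: "\<forall>v\<in>V. \<mu> v \<noteq> 0 \<longrightarrow> degree E tail head v = 2"
    and iii: "boundary E tail head \<psi>\<^sub>3 u = \<mu> u"
    and iv: "\<mu> u = 0 \<longrightarrow> boundary E tail head \<psi>\<^sub>2 u = 0"
    and v: "\<forall>e\<in>delta E tail head u. (\<psi>\<^sub>2 e, \<psi>\<^sub>3 e) \<noteq> (0, 0)"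
  shows "\<exists>(\<phi>\<^sub>2 :: 'e \<Rightarrow> 2) (\<phi>\<^sub>3 :: 'e \<Rightarrow> 3).
           (\<forall>e\<in>delta E tail head u. \<phi>\<^sub>2 e = \<psi>\<^sub>2 e \<and> \<phi>\<^sub>3 e = \<psi>\<^sub>3 e)
         \<and> (\<forall>v\<in>V. boundary E tail head \<phi>\<^sub>3 v = \<mu> v)
         \<and> (\<forall>v\<in>V. \<mu> v = 0 \<longrightarrow> boundary E tail head \<phi>\<^sub>2 v = 0)
         \<and> (\<forall>e\<in>E. (\<phi>\<^sub>2 e, \<phi>\<^sub>3 e) \<noteq> (0, 0))"
proof -
  have fin: "finite E" using G by (simp add: oriented_graph_def)
  have I: "inst V E tail head u \<mu> \<psi>\<^sub>2 \<psi>\<^sub>3"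
    unfolding inst_def using G tec sub u i ii iii iv v by (simp add: boundary_bd[OF fin])
  obtain \<phi>2 \<phi>3 where s: "sol V E tail head u \<mu> \<psi>\<^sub>2 \<psi>\<^sub>3 \<phi>2 \<phi>3"
    using main_inst[OF I] by (auto simp: hasSol_def)
  then show ?thesis unfolding sol_def by (intro exI[of _ \<phi>2] exI[of _ \<phi>3]) (simp add: boundary_bd[OF fin])
qed

end
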